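(* Let $S=(N,M_0)$ be any Petri net system and $S^\Theta=(N^\Theta,M_0^\Theta)$ the system obtained from $S$ by the transformation $\Theta$. Then: (1) If $S$ is a 1S system then $S^\Theta$ is a 1S system; if $S$ is homogeneous then $S^\Theta$ is homogeneous; if $S$ is an H1S-WMG$_\le$ then $S^\Theta$ is an H1S-WMG$_\le$; if $S$ is a strongly connected H1S-WMG$_\le$ whose shared place deletion (if any) yields a strongly connected WMG$_\le$, then $S^\Theta$ also has these properties. (2) For each sequence $\alpha$ feasible in $S$, the expanded sequence $\theta(\alpha)$ is feasible in $S^\Theta$. (3) For each sequence $\beta'$ feasible in $S^\Theta$, the reduced sequence $\beta=\hat\theta(\beta')$ is also feasible in $S^\Theta$, and there is a sequence $\alpha$ feasible in $S$ such that $\theta(\alpha)$ is feasible in $S^\Theta$ and $\mathbf{P}(\theta(\alpha))=\mathbf{P}(\beta)$. (4) If each place of $S$ has a (finite) structural bound, then each place of $S^\Theta$ has a (finite) structural bound. (5) $S^\Theta$ is deadlockable iff $S$ is deadlockable. (6) $S^\Theta$ is live iff $S$ is live.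
   Context: A Petri net is $N=(P,T,W)$ with finite disjoint sets $P$, $T$ and weights $W:(P\times T)\cup(T\times P)\to\mathbb{N}$; incidence matrix $I(p,t)=W(t,p)-W(p,t)$; ${}^\bullet n=\{n':W(n',n)>0\}$, $n^\bullet=\{n':W(n,n')>0\}$. Transition $t$ is enabled at $M$ if $M(p)\ge W(p,t)$ for all $p$; firing yields $M+I[\cdot,t]$; $\mathbf{P}(\sigma)$ is the Parikh vector. A system is live if for every transition $t$ and every reachable marking $M'$ some marking reachable from $M'$ enables $t$; it is deadlockable if some reachable marking enables no transition. A place is shared if it has at least two outputs; 1S means at most one shared place; homogeneous means for each place all its output weights are equal; H1S-WMG$_\le$: homogeneous, at most one shared place, and deleting the shared place (if any) with its arcs, keeping all transitions, yields a net whose places each have at most one input and at most one output. Strongly connected refers to the bipartite graph on $P\cup T$ with arcs $(x,y)$ for $W(x,y)>0$. The structural bound of place $p$ is $SB(p,S)=\max\{M(p): M\in\mathbb{N}^P, \exists Y\in\mathbb{N}^T, M=M_0+I\cdot Y\}$ when finite. Transformation $\Theta$: start from $(N,M_0)$; for each pair $(p,t)$ of the original net $N$ with $p^\bullet=\{t\}$ and $|{}^\bullet t|\ge 2$, add two places $p_a^{(p,t)}$ (initial marking $0$) and $p_b^{(p,t)}$ (initial marking $1$), a transition $t_p^{(p,t)}$, arcs with $W(p,t_p^{(p,t)})=W(p,t)$ and $W(t_p^{(p,t)},p_a^{(p,t)})=W(p_a^{(p,t)},t)=W(t,p_b^{(p,t)})=W(p_b^{(p,t)},t_p^{(p,t)})=1$,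 and remove the arc $(p,t)$. Let $NewTrans$ be the set of added transitions. For a transition $t$ of $N$, let $NewTransPre(t)=NewTrans\cap{}^\bullet({}^\bullet t)$ (computed in $N^\Theta$), and $Seq(A)$ the sequence firing each transition of $A$ once in a fixed order ($\epsilon$ if $A=\emptyset$). Expanded sequence: $\theta(\epsilon)=\epsilon$ and $\theta(t\alpha')=Seq(NewTransPre(t))\,t\,\theta(\alpha')$. Reduced sequence: for a sequence $\beta'$ of $S^\Theta$, $\hat\theta(\beta')$ is obtained by removing each occurrence of a new transition $t_p^{(p,t)}$ after which no occurrence of $t$ (the unique transition with $\{t\}=(t_p^{(p,t)\bullet})^\bullet$) appears in $\beta'$. *)

theory Defs
  imports Main
begin

text \<open>A Petri net N = (P,T,W): the weight function W on (P x T) and (T x P) is split into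
  pre (arcs place -> transition) and post (arcs transition -> place).\<close>

record ('p,'t) pnet =
  places :: "'p set"
  transs :: "'t set"
  pre    :: "'p \<Rightarrow> 't \<Rightarrow> nat"
  post   :: "'t \<Rightarrow> 'p \<Rightarrow> nat"

definition wf_net :: "('p,'t) pnet \<Rightarrow> bool" where
  "wf_net N \<longleftrightarrow> finite (places N) \<and> finite (transs N) \<and>
     (\<forall>p t. pre N p t > 0 \<longrightarrow> p \<in> places N \<and> t \<in> transs N) \<and>
     (\<forall>t p. post N t p > 0 \<longrightarrow> p \<in> places N \<and> t \<in> transs N)"

definition inc :: "('p,'t) pnet \<Rightarrow> 'p \<Rightarrow> 't \<Rightarrow> int" where
  "inc N p t = int (post N t p) - int (pre N p t)"

definition preP :: "('p,'t) pnet \<Rightarrow> 'p \<Rightarrow> 't set" where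
  "preP N p = {t \<in> transs N. post N t p > 0}"
definition postP :: "('p,'t) pnet \<Rightarrow> 'p \<Rightarrow> 't set" where
  "postP N p = {t \<in> transs N. pre N p t > 0}"
definition preT :: "('p,'t) pnet \<Rightarrow> 't \<Rightarrow> 'p set" where
  "preT N t = {p \<in> places N. pre N p t > 0}"
definition postT :: "('p,'t) pnet \<Rightarrow> 't \<Rightarrow> 'p set" where
  "postT N t = {p \<in> places N. post N t p > 0}"

definition enabled :: "('p,'t) pnet \<Rightarrow> ('p \<Rightarrow> nat) \<Rightarrow> 't \<Rightarrow> bool" where
  "enabled N M t \<longleftrightarrow> (\<forall>p \<in> places N. M p \<ge> pre N p t)"

definition fire :: "('p,'t) pnet \<Rightarrow> ('p \<Rightarrow> nat) \<Rightarrow> 't \<Rightarrow> ('p \<Rightarrow> nat)" where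
  "fire N M t = (\<lambda>p. nat (int (M p) + inc N p t))"

fun run :: "('p,'t) pnet \<Rightarrow> ('p \<Rightarrow> nat) \<Rightarrow> 't list \<Rightarrow> ('p \<Rightarrow> nat) option" where
  "run N M [] = Some M"
| "run N M (t # \<sigma>) =
     (if t \<in> transs N \<and> enabled N M t then run N (fire N M t) \<sigma> else None)"

definition feasible :: "('p,'t) pnet \<Rightarrow> ('p \<Rightarrow> nat) \<Rightarrow> 't list \<Rightarrow> bool" where
  "feasible N M \<sigma> \<longleftrightarrow> run N M \<sigma> \<noteq> None"

definition reach :: "('p,'t) pnet \<Rightarrow> ('p \<Rightarrow> nat) \<Rightarrow> ('p \<Rightarrow> nat) set" where
  "reach N M = {M'. \<exists>\<sigma>. run N M \<sigma> = Some M'}"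

definition parikh :: "'t list \<Rightarrow> 't \<Rightarrow> nat" where
  "parikh \<sigma> = (\<lambda>t. count_list \<sigma> t)"

definition live :: "('p,'t) pnet \<Rightarrow> ('p \<Rightarrow> nat) \<Rightarrow> bool" where
  "live N M0 \<longleftrightarrow> (\<forall>t \<in> transs N. \<forall>M' \<in> reach N M0. \<exists>M'' \<in> reach N M'. enabled N M'' t)"

definition deadlockable :: "('p,'t) pnet \<Rightarrow> ('p \<Rightarrow> nat) \<Rightarrow> bool" where
  "deadlockable N M0 \<longleftrightarrow> (\<exists>M \<in> reach N M0. \<forall>t \<in> transs N. \<not> enabled N M t)"

definition shared :: "('p,'t) pnet \<Rightarrow> 'p \<Rightarrow> bool" where
  "shared N p \<longleftrightarrow> p \<in> places N \<and> card (postP N p) \<ge> 2"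

definition sharedPlaces :: "('p,'t) pnet \<Rightarrow> 'p set" where
  "sharedPlaces N = {p. shared N p}"

definition oneS :: "('p,'t) pnet \<Rightarrow> bool" where
  "oneS N \<longleftrightarrow> card (sharedPlaces N) \<le> 1"

definition homogeneous :: "('p,'t) pnet \<Rightarrow> bool" where
  "homogeneous N \<longleftrightarrow>
     (\<forall>p \<in> places N. \<forall>t \<in> postP N p. \<forall>t' \<in> postP N p. pre N p t = pre N p t')"

definition delete_places :: "('p,'t) pnet \<Rightarrow> 'p set \<Rightarrow> ('p,'t) pnet" where
  "delete_places N S = N\<lparr> places := places N - S,
                          pre := (\<lambda>p t. if p \<in> S then 0 else pre N p t),
                          post := (\<lambda>t p. if p \<in> S then 0 else post N t p) \<rparr>"

definition WMG_le :: "('p,'t) pnet \<Rightarrow> bool" where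
  "WMG_le N \<longleftrightarrow> (\<forall>p \<in> places N. card (preP N p) \<le> 1 \<and> card (postP N p) \<le> 1)"

definition shared_deletion :: "('p,'t) pnet \<Rightarrow> ('p,'t) pnet" where
  "shared_deletion N = delete_places N (sharedPlaces N)"

definition H1S_WMG_le :: "('p,'t) pnet \<Rightarrow> bool" where
  "H1S_WMG_le N \<longleftrightarrow> homogeneous N \<and> oneS N \<and> WMG_le (shared_deletion N)"

definition arcs :: "('p,'t) pnet \<Rightarrow> (('p + 't) \<times> ('p + 't)) set" where
  "arcs N = {(Inl p, Inr t) | p t. pre N p t > 0} \<union> {(Inr t, Inl p) | t p. post N t p > 0}"

definition nodes :: "('p,'t) pnet \<Rightarrow> ('p + 't) set" where
  "nodes N = Inl ` places N \<union> Inr ` transs N"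

definition strongly_connected :: "('p,'t) pnet \<Rightarrow> bool" where
  "strongly_connected N \<longleftrightarrow> (\<forall>x \<in> nodes N. \<forall>y \<in> nodes N. (x, y) \<in> (arcs N)\<^sup>*)"

text \<open>The structural bound SB(p,S) is finite iff the set of values M(p), M in N^P with
  M = M0 + I Y for some Y in N^T, is bounded.\<close>
definition struct_bounded :: "('p,'t) pnet \<Rightarrow> ('p \<Rightarrow> nat) \<Rightarrow> 'p \<Rightarrow> bool" where
  "struct_bounded N M0 p \<longleftrightarrow>
     (\<exists>b::nat. \<forall>(M :: 'p \<Rightarrow> nat) (Y :: 't \<Rightarrow> nat).
        (\<forall>q \<in> places N. int (M q) = int (M0 q) + (\<Sum>t \<in> transs N. inc N q t * int (Y t)))
        \<longrightarrow> M p \<le> b)"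

datatype ('p,'t) tplace = Old 'p | PA 'p 't | PB 'p 't
datatype ('p,'t) ttrans = OldT 't | TP 'p 't

definition thpairs :: "('p,'t) pnet \<Rightarrow> ('p \<times> 't) set" where
  "thpairs N = {(p,t). p \<in> places N \<and> t \<in> transs N \<and> postP N p = {t} \<and> card (preT N t) \<ge> 2}"

definition Theta :: "('p,'t) pnet \<Rightarrow> (('p,'t) tplace, ('p,'t) ttrans) pnet" where
  "Theta N = \<lparr>
     places = Old ` places N \<union> (\<lambda>(p,t). PA p t) ` thpairs N \<union> (\<lambda>(p,t). PB p t) ` thpairs N,
     transs = OldT ` transs N \<union> (\<lambda>(p,t). TP p t) ` thpairs N,
     pre = (\<lambda>x y. case (x, y) of
              (Old p, OldT t) \<Rightarrow> (if (p,t) \<in> thpairs N then 0 else pre N p t)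
            | (Old p, TP p' t') \<Rightarrow> (if (p',t') \<in> thpairs N \<and> p = p' then pre N p t' else 0)
            | (PA p t, OldT t') \<Rightarrow> (if (p,t) \<in> thpairs N \<and> t = t' then 1 else 0)
            | (PB p t, TP p' t') \<Rightarrow> (if (p,t) \<in> thpairs N \<and> p = p' \<and> t = t' then 1 else 0)
            | _ \<Rightarrow> 0),
     post = (\<lambda>y x. case (y, x) of
              (OldT t, Old p) \<Rightarrow> post N t p
            | (OldT t, PB p' t') \<Rightarrow> (if (p',t') \<in> thpairs N \<and> t = t' then 1 else 0)
            | (TP p t, PA p' t') \<Rightarrow> (if (p,t) \<in> thpairs N \<and> p = p' \<and> t = t' then 1 else 0)
            | _ \<Rightarrow> 0) \<rparr>"

definition Theta_M0 :: "('p \<Rightarrow> nat) \<Rightarrow> ('p,'t) tplace \<Rightarrow> nat" where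
  "Theta_M0 M0 = (\<lambda>x. case x of Old p \<Rightarrow> M0 p | PA p t \<Rightarrow> 0 | PB p t \<Rightarrow> 1)"

definition NewTrans :: "('p,'t) pnet \<Rightarrow> ('p,'t) ttrans set" where
  "NewTrans N = transs (Theta N) - OldT ` transs N"

definition NewTransPre :: "('p,'t) pnet \<Rightarrow> 't \<Rightarrow> ('p,'t) ttrans set" where
  "NewTransPre N t = NewTrans N \<inter> (\<Union>q \<in> preT (Theta N) (OldT t). preP (Theta N) q)"

definition Seq :: "'a set \<Rightarrow> 'a list" where
  "Seq A = (SOME xs. distinct xs \<and> set xs = A)"

fun expand :: "('p,'t) pnet \<Rightarrow> 't list \<Rightarrow> ('p,'t) ttrans list" where
  "expand N [] = []"
| "expand N (t # \<alpha>) = Seq (NewTransPre N t) @ [OldT t] @ expand N \<alpha>"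

definition target :: "('p,'t) pnet \<Rightarrow> ('p,'t) ttrans \<Rightarrow> ('p,'t) ttrans" where
  "target N u = (THE v. {v} = (\<Union>q \<in> postT (Theta N) u. postP (Theta N) q))"

fun reduce :: "('p,'t) pnet \<Rightarrow> ('p,'t) ttrans list \<Rightarrow> ('p,'t) ttrans list" where
  "reduce N [] = []"
| "reduce N (u # \<beta>) =
     (if u \<in> NewTrans N \<and> target N u \<notin> set \<beta> then reduce N \<beta> else u # reduce N \<beta>)"

end

theory Submission
  imports Defs
begin


lemma enabled_all: "wf_net N \<Longrightarrow> enabled N M t \<longleftrightarrow> (\<forall>p. pre N p t \<le> M p)"
  unfolding enabled_def wf_net_def by (metis le0 neq0_conv)

lemma fire_eq: "wf_net N \<Longrightarrow> enabled N M t \<Longrightarrow> fire N M t = (\<lambda>p. M p - pre N p t + post N t p)"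
  unfolding fire_def inc_def by (rule ext) (auto simp: enabled_all)

lemma run_append: "run N M (xs @ ys) = (case run N M xs of None \<Rightarrow> None | Some M' \<Rightarrow> run N M' ys)"
  by (induction xs arbitrary: M) auto

lemma Seq_prop: "finite A \<Longrightarrow> distinct (Seq A) \<and> set (Seq A) = A"
  unfolding Seq_def by (rule someI_ex) (metis finite_distinct_list)

lemma count_distinct: "distinct xs \<Longrightarrow> count_list xs x = (if x \<in> set xs then 1 else 0)"
  by (induction xs) auto

lemma pre_Th[simp]:
  "pre (Theta N) (Old p) (OldT t) = (if (p,t) \<in> thpairs N then 0 else pre N p t)"
  "pre (Theta N) (Old p) (TP p' t') = (if (p',t') \<in> thpairs N \<and> p = p' then pre N p t' else 0)"
  "pre (Theta N) (PA p t) (OldT t') = (if (p,t) \<in> thpairs N \<and> t = t' then 1 else 0)"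
  "pre (Theta N) (PA p t) (TP p' t') = 0"
  "pre (Theta N) (PB p t) (OldT t') = 0"
  "pre (Theta N) (PB p t) (TP p' t') = (if (p,t) \<in> thpairs N \<and> p = p' \<and> t = t' then 1 else 0)"
  by (simp_all add: Theta_def)

lemma post_Th[simp]:
  "post (Theta N) (OldT t) (Old p) = post N t p"
  "post (Theta N) (OldT t) (PB p' t') = (if (p',t') \<in> thpairs N \<and> t = t' then 1 else 0)"
  "post (Theta N) (OldT t) (PA p' t') = 0"
  "post (Theta N) (TP p t) (PA p' t') = (if (p,t) \<in> thpairs N \<and> p = p' \<and> t = t' then 1 else 0)"
  "post (Theta N) (TP p t) (Old p') = 0"
  "post (Theta N) (TP p t) (PB p' t') = 0"
  by (simp_all add: Theta_def)

lemma places_Th: "places (Theta N) = Old ` places N \<union> (\<lambda>(p,t). PA p t) ` thpairs N \<union> (\<lambda>(p,t). PB p t) ` thpairs N"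
  by (simp add: Theta_def)
lemma transs_Th: "transs (Theta N) = OldT ` transs N \<union> (\<lambda>(p,t). TP p t) ` thpairs N"
  by (simp add: Theta_def)

lemma mem_places_Th[simp]:
  "Old p \<in> places (Theta N) \<longleftrightarrow> p \<in> places N"
  "PA p t \<in> places (Theta N) \<longleftrightarrow> (p,t) \<in> thpairs N"
  "PB p t \<in> places (Theta N) \<longleftrightarrow> (p,t) \<in> thpairs N"
  by (auto simp: places_Th)
lemma mem_transs_Th[simp]:
  "OldT t \<in> transs (Theta N) \<longleftrightarrow> t \<in> transs N"
  "TP p t \<in> transs (Theta N) \<longleftrightarrow> (p,t) \<in> thpairs N"
  by (auto simp: transs_Th)


context fixes N :: "('p,'t) pnet" assumes wf: "wf_net N"
begin

lemma pair_D: "(p,t) \<in> thpairs N \<Longrightarrow> p \<in> places N \<and> t \<in> transs N \<and> pre N p t > 0 \<and> (\<forall>t'. pre N p t' > 0 \<longrightarrow> t' = t)"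
  using wf unfolding thpairs_def postP_def wf_net_def by (auto; blast)

lemma pair_unique: "(p,t) \<in> thpairs N \<Longrightarrow> (p,t') \<in> thpairs N \<Longrightarrow> t' = t"
  using pair_D by blast

lemma finite_thpairs: "finite (thpairs N)"
proof -
  have "thpairs N \<subseteq> places N \<times> transs N" unfolding thpairs_def by auto
  thus ?thesis using wf unfolding wf_net_def by (meson finite_SigmaI finite_subset)
qed

lemma wf_Th: "wf_net (Theta N)"
proof -
  have f: "finite (places N)" "finite (transs N)" using wf by (auto simp: wf_net_def)
  have "finite (places (Theta N))" unfolding places_Th using f finite_thpairs by auto
  moreover have "finite (transs (Theta N))" unfolding transs_Th using f finite_thpairs by auto
  moreover have "\<forall>x u. pre (Theta N) x u > 0 \<longrightarrow> x \<in> places (Theta N) \<and> u \<in> transs (Theta N)"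
  proof (intro allI impI)
    fix x u assume "pre (Theta N) x u > 0"
    then show "x \<in> places (Theta N) \<and> u \<in> transs (Theta N)"
      using wf pair_D unfolding wf_net_def
      by (cases x; cases u; auto split: if_splits)
  qed
  moreover have "\<forall>u x. post (Theta N) u x > 0 \<longrightarrow> x \<in> places (Theta N) \<and> u \<in> transs (Theta N)"
  proof (intro allI impI)
    fix x u assume "post (Theta N) u x > 0"
    then show "x \<in> places (Theta N) \<and> u \<in> transs (Theta N)"
      using wf pair_D unfolding wf_net_def
      by (cases x; cases u; auto split: if_splits)
  qed
  ultimately show ?thesis unfolding wf_net_def by blast
qed

end



definition absM :: "('p,'t) pnet \<Rightarrow> (('p,'t) tplace \<Rightarrow> nat) \<Rightarrow> 'p \<Rightarrow> nat" where
  "absM N M' p = M' (Old p) + (if \<exists>t. (p,t) \<in> thpairs N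
      then M' (PA p (SOME t. (p,t) \<in> thpairs N)) * pre N p (SOME t. (p,t) \<in> thpairs N) else 0)"

definition thinv :: "('p,'t) pnet \<Rightarrow> (('p,'t) tplace \<Rightarrow> nat) \<Rightarrow> bool" where
  "thinv N M' \<longleftrightarrow> (\<forall>p t. (p,t) \<in> thpairs N \<longrightarrow> M' (PA p t) + M' (PB p t) = 1)"

fun oldproj :: "('p,'t) ttrans list \<Rightarrow> 't list" where
  "oldproj [] = []"
| "oldproj (OldT t # xs) = t # oldproj xs"
| "oldproj (TP _ _ # xs) = oldproj xs"

context fixes N :: "('p,'t) pnet" assumes wf: "wf_net N"
begin

lemma absM_pair: "(p,t) \<in> thpairs N \<Longrightarrow> absM N M' p = M' (Old p) + M' (PA p t) * pre N p t"
  unfolding absM_def using pair_unique[OF wf]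
  by (smt (verit, best) someI_ex)

lemma absM_nopair: "\<forall>t. (p,t) \<notin> thpairs N \<Longrightarrow> absM N M' p = M' (Old p)"
  unfolding absM_def by auto

lemma fire_Th: "enabled (Theta N) M' u \<Longrightarrow> fire (Theta N) M' u = (\<lambda>x. M' x - pre (Theta N) x u + post (Theta N) u x)"
  using fire_eq[OF wf_Th[OF wf]] .

lemma en_Th: "enabled (Theta N) M' u \<longleftrightarrow> (\<forall>x. pre (Theta N) x u \<le> M' x)"
  using enabled_all[OF wf_Th[OF wf]] .

lemma en_TP: "(p,t) \<in> thpairs N \<Longrightarrow> enabled (Theta N) M' (TP p t) \<longleftrightarrow> pre N p t \<le> M' (Old p) \<and> 1 \<le> M' (PB p t)"
  unfolding en_Th
proof safe
  fix x assume "(p,t) \<in> thpairs N" "pre N p t \<le> M' (Old p)" "1 \<le> M' (PB p t)"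
  thus "pre (Theta N) x (TP p t) \<le> M' x" by (cases x) auto
next
  assume pr: "(p,t) \<in> thpairs N" and a: "\<forall>x. pre (Theta N) x (TP p t) \<le> M' x"
  show "pre N p t \<le> M' (Old p)" using a[rule_format, of "Old p"] pr by simp
  show "1 \<le> M' (PB p t)" using a[rule_format, of "PB p t"] pr by simp
qed

lemma en_OldT: "enabled (Theta N) M' (OldT t) \<longleftrightarrow>
   (\<forall>q. (q,t) \<notin> thpairs N \<longrightarrow> pre N q t \<le> M' (Old q)) \<and> (\<forall>q. (q,t) \<in> thpairs N \<longrightarrow> 1 \<le> M' (PA q t))"
  unfolding en_Th
proof safe
  fix x assume "\<forall>q. (q,t) \<notin> thpairs N \<longrightarrow> pre N q t \<le> M' (Old q)" "\<forall>q. (q,t) \<in> thpairs N \<longrightarrow> 1 \<le> M' (PA q t)"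
  thus "pre (Theta N) x (OldT t) \<le> M' x" by (cases x) auto
next
  fix q assume a: "\<forall>x. pre (Theta N) x (OldT t) \<le> M' x"
  show "(q,t) \<notin> thpairs N \<Longrightarrow> pre N q t \<le> M' (Old q)" using a[rule_format, of "Old q"] by simp
  show "(q,t) \<in> thpairs N \<Longrightarrow> 1 \<le> M' (PA q t)" using a[rule_format, of "PA q t"] by simp
qed

lemma fire_TP: "(p,t) \<in> thpairs N \<Longrightarrow> enabled (Theta N) M' (TP p t) \<Longrightarrow>
  fire (Theta N) M' (TP p t) = M'(Old p := M' (Old p) - pre N p t, PA p t := M' (PA p t) + 1, PB p t := M' (PB p t) - 1)"
  by (rule ext, simp add: fire_Th, case_tac x) auto

lemma fire_OldT: "enabled (Theta N) M' (OldT t) \<Longrightarrow>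
  fire (Theta N) M' (OldT t) = (\<lambda>x. case x of
     Old q \<Rightarrow> M' (Old q) - (if (q,t) \<in> thpairs N then 0 else pre N q t) + post N t q
   | PA q t' \<Rightarrow> (if (q,t') \<in> thpairs N \<and> t' = t then M' (PA q t') - 1 else M' (PA q t'))
   | PB q t' \<Rightarrow> (if (q,t') \<in> thpairs N \<and> t' = t then M' (PB q t') + 1 else M' (PB q t')))"
  by (rule ext, simp add: fire_Th, case_tac x) auto

lemma S_TP:
  assumes inv: "thinv N M'" and pr: "(p,t) \<in> thpairs N" and en: "enabled (Theta N) M' (TP p t)"
  shows "thinv N (fire (Theta N) M' (TP p t)) \<and> absM N (fire (Theta N) M' (TP p t)) = absM N M'
    \<and> (\<forall>q t'. fire (Theta N) M' (TP p t) (PA q t') = (if q = p \<and> t' = t then 1 else M' (PA q t')))"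
proof -
  have e: "pre N p t \<le> M' (Old p)" "1 \<le> M' (PB p t)" using en pr en_TP by auto
  hence pa: "M' (PA p t) = 0" using inv pr unfolding thinv_def by fastforce
  have pb: "M' (PB p t) = 1" using inv pr pa unfolding thinv_def by (metis add_0)
  let ?F = "fire (Theta N) M' (TP p t)"
  have F: "?F = M'(Old p := M' (Old p) - pre N p t, PA p t := M' (PA p t) + 1, PB p t := M' (PB p t) - 1)"
    using fire_TP pr en by blast
  have "thinv N ?F" using inv pb pa unfolding F thinv_def by auto
  moreover have "absM N ?F q = absM N M' q" for q
  proof (cases "\<exists>t'. (q,t') \<in> thpairs N")
    case True
    then obtain t' where t': "(q,t') \<in> thpairs N" by blast
    show ?thesis
    proof (cases "q = p")
      case True
      hence "t' = t" using t' pr pair_unique[OF wf] by blast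
      thus ?thesis using True t' e pa F by (simp add: absM_pair)
    next
      case False
      thus ?thesis using t' F by (simp add: absM_pair)
    qed
  next
    case False
    hence "q \<noteq> p" using pr by blast
    thus ?thesis using False F by (simp add: absM_nopair)
  qed
  moreover have "\<forall>q t'. ?F (PA q t') = (if q = p \<and> t' = t then 1 else M' (PA q t'))"
    using F pa by auto
  ultimately show ?thesis by blast
qed

lemma S_Old:
  assumes inv: "thinv N M'" and tr: "t \<in> transs N" and en: "enabled (Theta N) M' (OldT t)"
  shows "enabled N (absM N M') t \<and> thinv N (fire (Theta N) M' (OldT t))
    \<and> absM N (fire (Theta N) M' (OldT t)) = fire N (absM N M') t
    \<and> (\<forall>q t'. (q,t') \<in> thpairs N \<longrightarrow> fire (Theta N) M' (OldT t) (PA q t') = (if t' = t then 0 else M' (PA q t')))"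
proof -
  have e1: "\<And>q. (q,t) \<notin> thpairs N \<Longrightarrow> pre N q t \<le> M' (Old q)"
   and e2: "\<And>q. (q,t) \<in> thpairs N \<Longrightarrow> 1 \<le> M' (PA q t)" using en en_OldT by auto
  have pa1: "\<And>q. (q,t) \<in> thpairs N \<Longrightarrow> M' (PA q t) = 1 \<and> M' (PB q t) = 0"
    using e2 inv unfolding thinv_def by fastforce
  let ?F = "fire (Theta N) M' (OldT t)"
  note F = fire_OldT[OF en]
  have ab: "pre N q t \<le> absM N M' q" for q
  proof (cases "\<exists>t'. (q,t') \<in> thpairs N")
    case True
    then obtain t' where t': "(q,t') \<in> thpairs N" by blast
    show ?thesis
    proof (cases "t' = t")
      case True thus ?thesis using t' pa1 by (simp add: absM_pair)
    next
      case False
      hence "pre N q t = 0" using pair_D[OF wf t'] by auto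
      thus ?thesis by simp
    qed
  next
    case False thus ?thesis using e1 by (simp add: absM_nopair)
  qed
  hence enN: "enabled N (absM N M') t" using enabled_all[OF wf] by blast
  have "thinv N ?F" using inv pa1 unfolding F thinv_def by auto
  moreover have "absM N ?F q = fire N (absM N M') t q" for q
  proof (cases "\<exists>t'. (q,t') \<in> thpairs N")
    case True
    then obtain t' where t': "(q,t') \<in> thpairs N" by blast
    show ?thesis
    proof (cases "t' = t")
      case True thus ?thesis using t' pa1 by (simp add: absM_pair F fire_eq[OF wf enN])
    next
      case False
      hence "pre N q t = 0" using pair_D[OF wf t'] by auto
      moreover have "(q,t) \<notin> thpairs N" using False t' pair_unique[OF wf] by blast
      ultimately show ?thesis using t' False by (simp add: absM_pair F fire_eq[OF wf enN])
    qed
  next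
    case False thus ?thesis by (simp add: absM_nopair F fire_eq[OF wf enN])
  qed
  moreover have "\<forall>q t'. (q,t') \<in> thpairs N \<longrightarrow> ?F (PA q t') = (if t' = t then 0 else M' (PA q t'))"
    using pa1 F by auto
  ultimately show ?thesis using enN by blast
qed

lemma Back:
  "thinv N M' \<Longrightarrow> run (Theta N) M' \<beta> = Some M'' \<Longrightarrow>
     run N (absM N M') (oldproj \<beta>) = Some (absM N M'') \<and> thinv N M''"
proof (induction \<beta> arbitrary: M')
  case Nil thus ?case by simp
next
  case (Cons u \<beta>)
  hence tr: "u \<in> transs (Theta N)" and en: "enabled (Theta N) M' u"
    and r: "run (Theta N) (fire (Theta N) M' u) \<beta> = Some M''" by (auto split: if_splits)
  show ?case
  proof (cases u)
    case (OldT t)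
    hence t: "t \<in> transs N" using tr by simp
    have S: "enabled N (absM N M') t" "thinv N (fire (Theta N) M' (OldT t))"
      "absM N (fire (Theta N) M' (OldT t)) = fire N (absM N M') t"
      using S_Old[OF Cons.prems(1) t] en OldT by auto
    have "run N (absM N (fire (Theta N) M' (OldT t))) (oldproj \<beta>) = Some (absM N M'') \<and> thinv N M''"
      using Cons.IH S(2) r OldT by auto
    thus ?thesis using S t OldT by simp
  next
    case (TP p t)
    hence pt: "(p,t) \<in> thpairs N" using tr by simp
    have S: "thinv N (fire (Theta N) M' (TP p t))" "absM N (fire (Theta N) M' (TP p t)) = absM N M'"
      using S_TP[OF Cons.prems(1) pt] en TP by auto
    have "run N (absM N (fire (Theta N) M' (TP p t))) (oldproj \<beta>) = Some (absM N M'') \<and> thinv N M''"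
      using Cons.IH S(1) r TP by auto
    thus ?thesis using S TP by simp
  qed
qed

lemma Fwd_enable:
  assumes inv: "thinv N M'" and tr: "t \<in> transs N" and en: "enabled N (absM N M') t"
  shows "(\<exists>p. (p,t) \<in> thpairs N \<and> M' (PA p t) = 0 \<and> enabled (Theta N) M' (TP p t)) \<or> enabled (Theta N) M' (OldT t)"
proof (cases "\<exists>p. (p,t) \<in> thpairs N \<and> M' (PA p t) = 0")
  case True
  then obtain p where p: "(p,t) \<in> thpairs N" "M' (PA p t) = 0" by blast
  hence "M' (PB p t) = 1" using inv unfolding thinv_def by fastforce
  moreover have "pre N p t \<le> M' (Old p)" using en p enabled_all[OF wf] by (metis absM_pair add.right_neutral mult_0)
  ultimately show ?thesis using p en_TP by auto
next
  case False
  have "enabled (Theta N) M' (OldT t)" unfolding en_OldT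
  proof safe
    fix q assume q: "(q,t) \<notin> thpairs N"
    show "pre N q t \<le> M' (Old q)"
    proof (cases "\<exists>t'. (q,t') \<in> thpairs N")
      case True
      then obtain t' where t': "(q,t') \<in> thpairs N" by blast
      hence "t' \<noteq> t" using q by blast
      hence "pre N q t = 0" using pair_D[OF wf t'] by auto
      thus ?thesis by simp
    next
      case False thus ?thesis using en enabled_all[OF wf] absM_nopair by metis
    qed
  next
    fix q assume "(q,t) \<in> thpairs N"
    thus "1 \<le> M' (PA q t)" using False by auto
  qed
  thus ?thesis by blast
qed

end



lemma count_list_append': "count_list (xs @ ys) x = count_list xs x + count_list ys x"
  by (induction xs) auto

lemma run_set: "run N M \<beta> = Some M' \<Longrightarrow> set \<beta> \<subseteq> transs N"
  by (induction \<beta> arbitrary: M) (auto split: if_splits)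

lemma reduce_set: "set (reduce N \<beta>) \<subseteq> set \<beta>"
  by (induction \<beta>) auto

context fixes N :: "('p,'t) pnet" assumes wf: "wf_net N"
begin

lemma NewTrans_eq: "NewTrans N = {TP p t | p t. (p,t) \<in> thpairs N}"
  unfolding NewTrans_def transs_Th by auto

lemma NewTransPre_eq: "NewTransPre N t = {TP q t | q. (q,t) \<in> thpairs N}"
proof (rule set_eqI)
  fix u
  show "u \<in> NewTransPre N t \<longleftrightarrow> u \<in> {TP q t | q. (q,t) \<in> thpairs N}"
  proof
    assume "u \<in> NewTransPre N t"
    then obtain p t' x where u: "u = TP p t'" "(p,t') \<in> thpairs N" and x: "x \<in> preT (Theta N) (OldT t)"
      "u \<in> preP (Theta N) x"
      unfolding NewTransPre_def NewTrans_eq by auto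
    have "x = PA p t'" using x(2) u by (cases x) (auto simp: preP_def split: if_splits)
    hence "t' = t" using x(1) by (auto simp: preT_def split: if_splits)
    thus "u \<in> {TP q t | q. (q,t) \<in> thpairs N}" using u by auto
  next
    assume "u \<in> {TP q t | q. (q,t) \<in> thpairs N}"
    then obtain q where u: "u = TP q t" "(q,t) \<in> thpairs N" by auto
    have "PA q t \<in> preT (Theta N) (OldT t)" using u by (auto simp: preT_def)
    moreover have "u \<in> preP (Theta N) (PA q t)" using u by (auto simp: preP_def)
    ultimately show "u \<in> NewTransPre N t" unfolding NewTransPre_def NewTrans_eq using u by blast
  qed
qed

lemma target_eq: "(p,t) \<in> thpairs N \<Longrightarrow> target N (TP p t) = OldT t"
proof -
  assume pt: "(p,t) \<in> thpairs N"
  have a: "postT (Theta N) (TP p t) = {PA p t}"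
  proof (rule set_eqI)
    fix x show "x \<in> postT (Theta N) (TP p t) \<longleftrightarrow> x \<in> {PA p t}"
      using pt by (cases x) (auto simp: postT_def split: if_splits)
  qed
  have b: "postP (Theta N) (PA p t) = {OldT t}"
  proof (rule set_eqI)
    fix u show "u \<in> postP (Theta N) (PA p t) \<longleftrightarrow> u \<in> {OldT t}"
      using pt pair_D[OF wf pt] by (cases u) (auto simp: postP_def split: if_splits)
  qed
  show ?thesis by (simp add: target_def a b)
qed

lemma TPlist:
  assumes "distinct xs" "\<forall>u\<in>set xs. \<exists>q. u = TP q t \<and> (q,t) \<in> thpairs N \<and> pre N q t \<le> M' (Old q) \<and> 1 \<le> M' (PB q t)"
  shows "run (Theta N) M' xs = Some (\<lambda>x. case x of
      Old q \<Rightarrow> if TP q t \<in> set xs then M' (Old q) - pre N q t else M' (Old q)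
    | PA q t' \<Rightarrow> if t' = t \<and> TP q t \<in> set xs then M' (PA q t') + 1 else M' (PA q t')
    | PB q t' \<Rightarrow> if t' = t \<and> TP q t \<in> set xs then M' (PB q t') - 1 else M' (PB q t'))"
  using assms
proof (induction xs arbitrary: M')
  case Nil
  show ?case by (simp, rule ext, simp split: tplace.split)
next
  case (Cons u xs)
  then obtain q where u: "u = TP q t" "(q,t) \<in> thpairs N" "pre N q t \<le> M' (Old q)" "1 \<le> M' (PB q t)" by auto
  have en: "enabled (Theta N) M' u" using u en_TP[OF wf] by auto
  define M1 where "M1 = M'(Old q := M' (Old q) - pre N q t, PA q t := M' (PA q t) + 1, PB q t := M' (PB q t) - 1)"
  have F: "fire (Theta N) M' u = M1" unfolding M1_def u(1) using fire_TP[OF wf u(2)] en u(1) by simp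
  have nq: "TP q t \<notin> set xs" using Cons.prems(1) u by simp
  have "\<forall>v\<in>set xs. \<exists>q. v = TP q t \<and> (q,t) \<in> thpairs N \<and> pre N q t \<le> M1 (Old q) \<and> 1 \<le> M1 (PB q t)"
    using Cons.prems(2) nq unfolding M1_def by fastforce
  hence IH: "run (Theta N) M1 xs = Some (\<lambda>x. case x of
      Old q \<Rightarrow> if TP q t \<in> set xs then M1 (Old q) - pre N q t else M1 (Old q)
    | PA q t' \<Rightarrow> if t' = t \<and> TP q t \<in> set xs then M1 (PA q t') + 1 else M1 (PA q t')
    | PB q t' \<Rightarrow> if t' = t \<and> TP q t \<in> set xs then M1 (PB q t') - 1 else M1 (PB q t'))"
    using Cons.IH Cons.prems(1) by simp
  have tr: "u \<in> transs (Theta N)" using u by simp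
  have R: "run (Theta N) M' (u # xs) = run (Theta N) M1 xs" using tr en F by simp
  show ?case unfolding R IH
  proof (rule arg_cong[where f=Some], rule ext)
    fix x show "(case x of
      Old q \<Rightarrow> if TP q t \<in> set xs then M1 (Old q) - pre N q t else M1 (Old q)
    | PA q t' \<Rightarrow> if t' = t \<and> TP q t \<in> set xs then M1 (PA q t') + 1 else M1 (PA q t')
    | PB q t' \<Rightarrow> if t' = t \<and> TP q t \<in> set xs then M1 (PB q t') - 1 else M1 (PB q t')) =
     (case x of
      Old q' \<Rightarrow> if TP q' t \<in> set (u # xs) then M' (Old q') - pre N q' t else M' (Old q')
    | PA q' t' \<Rightarrow> if t' = t \<and> TP q' t \<in> set (u # xs) then M' (PA q' t') + 1 else M' (PA q' t')
    | PB q' t' \<Rightarrow> if t' = t \<and> TP q' t \<in> set (u # xs) then M' (PB q' t') - 1 else M' (PB q' t'))"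
    proof (cases x)
      case (Old q') thus ?thesis using nq by (cases "q' = q") (auto simp: M1_def u(1))
    next
      case (PA q' t') thus ?thesis using nq by (cases "q' = q \<and> t' = t") (auto simp: M1_def u(1))
    next
      case (PB q' t') thus ?thesis using nq by (cases "q' = q \<and> t' = t") (auto simp: M1_def u(1))
    qed
  qed
qed

lemma expand_step:
  assumes t: "t \<in> transs N" and en: "enabled N M t"
  shows "run (Theta N) (Theta_M0 M) (Seq (NewTransPre N t) @ [OldT t]) = Some (Theta_M0 (fire N M t))"
proof -
  have f1: "finite {q. (q,t) \<in> thpairs N}"
    by (rule finite_subset[of _ "fst ` thpairs N"]) (force, simp add: finite_thpairs[OF wf])
  have "{TP q t | q. (q,t) \<in> thpairs N} = (\<lambda>q. TP q t) ` {q. (q,t) \<in> thpairs N}" by auto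
  hence fin: "finite (NewTransPre N t)" unfolding NewTransPre_eq using f1 by simp
  let ?xs = "Seq (NewTransPre N t)"
  have xs: "distinct ?xs" "set ?xs = {TP q t | q. (q,t) \<in> thpairs N}" using Seq_prop[OF fin] NewTransPre_eq by auto
  have enp: "\<And>q. pre N q t \<le> M q" using en enabled_all[OF wf] by blast
  have "\<forall>u\<in>set ?xs. \<exists>q. u = TP q t \<and> (q,t) \<in> thpairs N \<and> pre N q t \<le> Theta_M0 M (Old q) \<and> 1 \<le> Theta_M0 M (PB q t)"
    using xs enp by (auto simp: Theta_M0_def)
  note T = TPlist[OF xs(1) this]
  have mem: "\<And>q. TP q t \<in> set ?xs \<longleftrightarrow> (q,t) \<in> thpairs N" using xs(2) by auto
  have r0: "run (Theta N) (Theta_M0 M) ?xs = Some (\<lambda>x. case x of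
      Old q \<Rightarrow> if (q,t) \<in> thpairs N then (Theta_M0 M :: ('p,'t) tplace \<Rightarrow> nat) (Old q) - pre N q t else (Theta_M0 M :: ('p,'t) tplace \<Rightarrow> nat) (Old q)
    | PA q t' \<Rightarrow> if t' = t \<and> (q,t) \<in> thpairs N then Theta_M0 M (PA q t') + 1 else Theta_M0 M (PA q t')
    | PB q t' \<Rightarrow> if t' = t \<and> (q,t) \<in> thpairs N then Theta_M0 M (PB q t') - 1 else Theta_M0 M (PB q t'))"
    using T unfolding mem by simp
  have r1: "run (Theta N) (Theta_M0 M) ?xs = Some (\<lambda>x. case x of
      Old q \<Rightarrow> if (q,t) \<in> thpairs N then M q - pre N q t else M q
    | PA q t' \<Rightarrow> if t' = t \<and> (q,t) \<in> thpairs N then 1 else 0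
    | PB q t' \<Rightarrow> if t' = t \<and> (q,t) \<in> thpairs N then 0 else 1)" (is "_ = Some ?M2")
    unfolding r0 by (simp, rule ext, simp add: Theta_M0_def split: tplace.split)
  have en2: "enabled (Theta N) ?M2 (OldT t)" unfolding en_OldT[OF wf] using enp by auto
  have "fire (Theta N) ?M2 (OldT t) = Theta_M0 (fire N M t)"
    unfolding fire_OldT[OF wf en2] fire_eq[OF wf en]
    by (rule ext) (auto simp: Theta_M0_def split: tplace.split)
  thus ?thesis using r1 en2 t by (simp add: run_append)
qed

lemma expand_run: "run N M \<alpha> = Some M1 \<Longrightarrow> run (Theta N) (Theta_M0 M) (expand N \<alpha>) = Some (Theta_M0 M1)"
proof (induction \<alpha> arbitrary: M)
  case Nil thus ?case by simp
next
  case (Cons t \<alpha>)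
  hence t: "t \<in> transs N" "enabled N M t" and r: "run N (fire N M t) \<alpha> = Some M1" by (auto split: if_splits)
  have "expand N (t # \<alpha>) = (Seq (NewTransPre N t) @ [OldT t]) @ expand N \<alpha>" by simp
  thus ?case using expand_step[OF t] Cons.IH[OF r] by (simp only: run_append) simp
qed

lemma thinv_M0: "thinv N (Theta_M0 M)" by (simp add: thinv_def Theta_M0_def)
lemma absM_M0: "absM N (Theta_M0 M) = M" by (rule ext) (simp add: absM_def Theta_M0_def)

end



lemma oldproj_count: "count_list (oldproj \<beta>) t = count_list \<beta> (OldT t)"
  by (induction \<beta> rule: oldproj.induct) auto

lemma reach_trans: "M1 \<in> reach N M \<Longrightarrow> M2 \<in> reach N M1 \<Longrightarrow> M2 \<in> reach N M"
  unfolding reach_def by (auto simp: run_append) (metis option.simps(5) run_append)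

context fixes N :: "('p,'t) pnet" assumes wf: "wf_net N"
begin

lemma reduce_count_old: "count_list (reduce N \<beta>) (OldT t) = count_list \<beta> (OldT t)"
  by (induction \<beta>) (auto simp: NewTrans_eq[OF wf])

lemma reduce_count0: "(p,t) \<in> thpairs N \<Longrightarrow> OldT t \<notin> set \<beta> \<Longrightarrow> count_list (reduce N \<beta>) (TP p t) = 0"
  by (induction \<beta>) (auto simp: NewTrans_eq[OF wf] target_eq[OF wf])

lemma Seq_NTP: "distinct (Seq (NewTransPre N t)) \<and> set (Seq (NewTransPre N t)) = {TP q t | q. (q,t) \<in> thpairs N}"
proof -
  have f1: "finite {q. (q,t) \<in> thpairs N}"
    by (rule finite_subset[of _ "fst ` thpairs N"]) (force, simp add: finite_thpairs[OF wf])
  have "{TP q t | q. (q,t) \<in> thpairs N} = (\<lambda>q. TP q t) ` {q. (q,t) \<in> thpairs N}" by auto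
  hence fin: "finite (NewTransPre N t)" unfolding NewTransPre_eq[OF wf] using f1 by simp
  show ?thesis using Seq_prop[OF fin] NewTransPre_eq[OF wf] by auto
qed

lemma expand_count_old: "count_list (expand N \<alpha>) (OldT t) = count_list \<alpha> t"
proof (induction \<alpha>)
  case Nil thus ?case by simp
next
  case (Cons t' \<alpha>)
  have "OldT t \<notin> set (Seq (NewTransPre N t'))"
    using Seq_NTP[of t'] by auto
  thus ?case using Cons by (simp add: count_list_append' count_list_0_iff)
qed

end



context fixes N :: "('p,'t) pnet" assumes wf: "wf_net N"
begin

lemma fin_pairs_t: "finite {p. (p,t) \<in> thpairs N \<and> P p}"
  by (rule finite_subset[of _ "fst ` thpairs N"]) (force, simp add: finite_thpairs[OF wf])

lemma Pre_t:
  "thinv N M' \<Longrightarrow> t \<in> transs N \<Longrightarrow> enabled N (absM N M') t \<Longrightarrow>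
   \<exists>xs M''. run (Theta N) M' xs = Some M'' \<and> thinv N M'' \<and> absM N M'' = absM N M' \<and>
     enabled (Theta N) M'' (OldT t) \<and> (\<forall>p t'. t' \<noteq> t \<longrightarrow> M'' (PA p t') = M' (PA p t'))"
proof (induction "card {p. (p,t) \<in> thpairs N \<and> M' (PA p t) = 0}" arbitrary: M' rule: less_induct)
  case less
  from Fwd_enable[OF wf less.prems] show ?case
  proof
    assume "\<exists>p. (p,t) \<in> thpairs N \<and> M' (PA p t) = 0 \<and> enabled (Theta N) M' (TP p t)"
    then obtain p where p: "(p,t) \<in> thpairs N" "M' (PA p t) = 0" "enabled (Theta N) M' (TP p t)" by blast
    let ?M1 = "fire (Theta N) M' (TP p t)"
    note S = S_TP[OF wf less.prems(1) p(1) p(3)]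
    have sub: "{q. (q,t) \<in> thpairs N \<and> ?M1 (PA q t) = 0} \<subset> {q. (q,t) \<in> thpairs N \<and> M' (PA q t) = 0}"
      using S p by auto
    have "card {q. (q,t) \<in> thpairs N \<and> ?M1 (PA q t) = 0} < card {q. (q,t) \<in> thpairs N \<and> M' (PA q t) = 0}"
      by (rule psubset_card_mono[OF fin_pairs_t sub])
    from less.hyps[OF this] S less.prems
    obtain xs M'' where r: "run (Theta N) ?M1 xs = Some M''" "thinv N M''" "absM N M'' = absM N ?M1"
      "enabled (Theta N) M'' (OldT t)" "\<forall>q t'. t' \<noteq> t \<longrightarrow> M'' (PA q t') = ?M1 (PA q t')" by auto
    have "run (Theta N) M' (TP p t # xs) = Some M''" using r(1) p by simp
    thus ?thesis using r S by (intro exI[of _ "TP p t # xs"] exI[of _ M'']) auto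
  next
    assume "enabled (Theta N) M' (OldT t)"
    thus ?thesis using less.prems by (intro exI[of _ "[]"] exI[of _ M']) auto
  qed
qed

lemma Step:
  assumes inv: "thinv N M'" and t: "t \<in> transs N" and en: "enabled N (absM N M') t"
  shows "\<exists>xs M''. run (Theta N) M' xs = Some M'' \<and> thinv N M'' \<and> absM N M'' = fire N (absM N M') t \<and>
     (\<forall>p t'. (p,t') \<in> thpairs N \<longrightarrow> M'' (PA p t') = (if t' = t then 0 else M' (PA p t')))"
proof -
  obtain xs M1 where r: "run (Theta N) M' xs = Some M1" "thinv N M1" "absM N M1 = absM N M'"
     "enabled (Theta N) M1 (OldT t)" "\<forall>p t'. t' \<noteq> t \<longrightarrow> M1 (PA p t') = M' (PA p t')"
    using Pre_t[OF inv t en] by blast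
  note S = S_Old[OF wf r(2) t r(4)]
  have "run (Theta N) M' (xs @ [OldT t]) = Some (fire (Theta N) M1 (OldT t))"
    using r t by (simp add: run_append)
  thus ?thesis using S r by (intro exI[of _ "xs @ [OldT t]"] exI) auto
qed

lemma Sim:
  "thinv N M' \<Longrightarrow> run N (absM N M') \<sigma> = Some M1 \<Longrightarrow>
   \<exists>xs M''. run (Theta N) M' xs = Some M'' \<and> thinv N M'' \<and> absM N M'' = M1 \<and>
     (\<forall>p t'. (p,t') \<in> thpairs N \<longrightarrow> M' (PA p t') = 0 \<longrightarrow> M'' (PA p t') = 0)"
proof (induction \<sigma> arbitrary: M')
  case Nil thus ?case by (intro exI[of _ "[]"] exI[of _ M']) auto
next
  case (Cons t \<sigma>)
  hence t: "t \<in> transs N" "enabled N (absM N M') t" and r: "run N (fire N (absM N M') t) \<sigma> = Some M1"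
    by (auto split: if_splits)
  obtain xs M2 where s: "run (Theta N) M' xs = Some M2" "thinv N M2" "absM N M2 = fire N (absM N M') t"
     "\<forall>p t'. (p,t') \<in> thpairs N \<longrightarrow> M2 (PA p t') = (if t' = t then 0 else M' (PA p t'))"
    using Step[OF Cons.prems(1) t] by blast
  obtain ys M'' where s2: "run (Theta N) M2 ys = Some M''" "thinv N M''" "absM N M'' = M1"
     "\<forall>p t'. (p,t') \<in> thpairs N \<longrightarrow> M2 (PA p t') = 0 \<longrightarrow> M'' (PA p t') = 0"
    using Cons.IH[OF s(2)] r s(3) by auto
  have "run (Theta N) M' (xs @ ys) = Some M''" using s s2 by (simp add: run_append)
  thus ?case using s s2 by (intro exI[of _ "xs @ ys"] exI[of _ M'']) auto
qed

lemma Dead: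
  "thinv N M' \<Longrightarrow> (\<forall>t \<in> transs N. \<not> enabled N (absM N M') t) \<Longrightarrow>
   \<exists>xs M''. run (Theta N) M' xs = Some M'' \<and> (\<forall>u \<in> transs (Theta N). \<not> enabled (Theta N) M'' u)"
proof (induction "card {pt \<in> thpairs N. M' (PA (fst pt) (snd pt)) = 0}" arbitrary: M' rule: less_induct)
  case less
  show ?case
  proof (cases "\<exists>p t. (p,t) \<in> thpairs N \<and> enabled (Theta N) M' (TP p t)")
    case True
    then obtain p t where p: "(p,t) \<in> thpairs N" "enabled (Theta N) M' (TP p t)" by blast
    have "1 \<le> M' (PB p t)" using p en_TP[OF wf] by blast
    hence pa: "M' (PA p t) = 0" using less.prems(1) p unfolding thinv_def by fastforce
    let ?M1 = "fire (Theta N) M' (TP p t)"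
    note S = S_TP[OF wf less.prems(1) p(1) p(2)]
    have s1: "{pt \<in> thpairs N. ?M1 (PA (fst pt) (snd pt)) = 0} \<subseteq> {pt \<in> thpairs N. M' (PA (fst pt) (snd pt)) = 0}"
      using S by auto
    have s2: "(p,t) \<in> {pt \<in> thpairs N. M' (PA (fst pt) (snd pt)) = 0}" "(p,t) \<notin> {pt \<in> thpairs N. ?M1 (PA (fst pt) (snd pt)) = 0}"
      using S p pa by auto
    have sub: "{pt \<in> thpairs N. ?M1 (PA (fst pt) (snd pt)) = 0} \<subset> {pt \<in> thpairs N. M' (PA (fst pt) (snd pt)) = 0}"
      using s1 s2 by blast
    have "card {pt \<in> thpairs N. ?M1 (PA (fst pt) (snd pt)) = 0} < card {pt \<in> thpairs N. M' (PA (fst pt) (snd pt)) = 0}"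
      by (rule psubset_card_mono[OF _ sub]) (simp add: finite_thpairs[OF wf])
    from less.hyps[OF this] S less.prems
    obtain xs M'' where r: "run (Theta N) ?M1 xs = Some M''" "\<forall>u \<in> transs (Theta N). \<not> enabled (Theta N) M'' u"
      by auto
    have "run (Theta N) M' (TP p t # xs) = Some M''" using r(1) p by simp
    thus ?thesis using r by blast
  next
    case False
    have "\<forall>u \<in> transs (Theta N). \<not> enabled (Theta N) M' u"
    proof
      fix u assume u: "u \<in> transs (Theta N)"
      show "\<not> enabled (Theta N) M' u"
      proof (cases u)
        case (OldT t)
        thus ?thesis using u S_Old[OF wf less.prems(1)] less.prems(2) by auto
      next
        case (TP p t) thus ?thesis using u False by auto
      qed
    qed
    thus ?thesis by (intro exI[of _ "[]"] exI[of _ M']) auto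
  qed
qed

lemma R1:
  "run (Theta N) M \<beta> \<noteq> None \<Longrightarrow> (\<forall>x::('p,'t) tplace. (\<forall>q t'. x = PA q t' \<longrightarrow> OldT t' \<in> set \<beta>) \<longrightarrow> M x \<le> M1 x) \<Longrightarrow>
   run (Theta N) M1 (reduce N \<beta>) \<noteq> None"
proof (induction \<beta> arbitrary: M M1)
  case Nil thus ?case by simp
next
  case (Cons u \<beta>)
  hence tr: "u \<in> transs (Theta N)" and en: "enabled (Theta N) M u"
    and r: "run (Theta N) (fire (Theta N) M u) \<beta> \<noteq> None" by (auto split: if_splits)
  note F = fire_Th[OF wf en]
  show ?case
  proof (cases "u \<in> NewTrans N \<and> target N u \<notin> set \<beta>")
    case True
    then obtain p t where u: "u = TP p t" "(p,t) \<in> thpairs N" using NewTrans_eq[OF wf] by auto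
    hence nt: "OldT t \<notin> set \<beta>" using True target_eq[OF wf] by auto
    have "\<forall>x::('p,'t) tplace. (\<forall>q t'. x = PA q t' \<longrightarrow> OldT t' \<in> set \<beta>) \<longrightarrow> fire (Theta N) M u x \<le> M1 x"
    proof (intro allI impI)
      fix x :: "('p,'t) tplace" assume x: "\<forall>q t'. x = PA q t' \<longrightarrow> OldT t' \<in> set \<beta>"
      hence "x \<noteq> PA p t" using nt by blast
      hence "post (Theta N) u x = 0" using u by (cases x) auto
      moreover have "M x \<le> M1 x" using Cons.prems(2) x by auto
      ultimately show "fire (Theta N) M u x \<le> M1 x" unfolding F by simp
    qed
    from Cons.IH[OF r this] True show ?thesis by simp
  next
    case False
    have pre_le: "pre (Theta N) x u \<le> M1 x" for x
    proof (cases "\<forall>q t'. x = PA q t' \<longrightarrow> OldT t' \<in> set (u # \<beta>)")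
      case True
      hence "M x \<le> M1 x" using Cons.prems(2) by blast
      thus ?thesis using en en_Th[OF wf] by (meson le_trans)
    next
      case False
      then obtain q t' where x: "x = PA q t'" "OldT t' \<notin> set (u # \<beta>)" by blast
      hence "pre (Theta N) x u = 0" by (cases u) auto
      thus ?thesis by simp
    qed
    hence en1: "enabled (Theta N) M1 u" using en_Th[OF wf] by blast
    have "\<forall>x::('p,'t) tplace. (\<forall>q t'. x = PA q t' \<longrightarrow> OldT t' \<in> set \<beta>) \<longrightarrow> fire (Theta N) M u x \<le> fire (Theta N) M1 u x"
    proof (intro allI impI)
      fix x :: "('p,'t) tplace" assume x: "\<forall>q t'. x = PA q t' \<longrightarrow> OldT t' \<in> set \<beta>"
      hence "M x \<le> M1 x" using Cons.prems(2) by auto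
      thus "fire (Theta N) M u x \<le> fire (Theta N) M1 u x" unfolding F fire_Th[OF wf en1] by simp
    qed
    from Cons.IH[OF r this] False en1 tr show ?thesis by auto
  qed
qed

lemma C2:
  "thinv N M \<Longrightarrow> run (Theta N) M \<beta> \<noteq> None \<Longrightarrow> (p,t) \<in> thpairs N \<Longrightarrow> OldT t \<in> set \<beta> \<Longrightarrow>
   count_list (reduce N \<beta>) (TP p t) + M (PA p t) = count_list \<beta> (OldT t)"
proof (induction \<beta> arbitrary: M)
  case Nil thus ?case by simp
next
  case (Cons u \<beta>)
  hence tr: "u \<in> transs (Theta N)" and en: "enabled (Theta N) M u"
    and r: "run (Theta N) (fire (Theta N) M u) \<beta> \<noteq> None" by (auto split: if_splits)
  have inv1: "thinv N (fire (Theta N) M u)"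
    using tr en S_TP[OF wf Cons.prems(1)] S_Old[OF wf Cons.prems(1)] by (cases u) auto
  show ?case
  proof (cases "u = OldT t")
    case True
    have "1 \<le> M (PA p t)" using en True en_OldT[OF wf] Cons.prems(3) by blast
    hence pa: "M (PA p t) = 1" using Cons.prems(1,3) unfolding thinv_def by fastforce
    have pa1: "fire (Theta N) M u (PA p t) = 0"
      using S_Old[OF wf Cons.prems(1)] tr en True Cons.prems(3) by auto
    have nn: "u \<notin> NewTrans N" using True NewTrans_eq[OF wf] by auto
    show ?thesis
    proof (cases "OldT t \<in> set \<beta>")
      case True
      from Cons.IH[OF inv1 r Cons.prems(3) True] pa pa1 nn \<open>u = OldT t\<close> show ?thesis by simp
    next
      case False
      hence "count_list \<beta> (OldT t) = 0" by (simp add: count_list_0_iff)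
      thus ?thesis using reduce_count0[OF wf Cons.prems(3) False] pa nn \<open>u = OldT t\<close> by simp
    qed
  next
    case False
    hence inb: "OldT t \<in> set \<beta>" using Cons.prems(4) by simp
    note IH = Cons.IH[OF inv1 r Cons.prems(3) inb]
    show ?thesis
    proof (cases "u = TP p t")
      case True
      have "1 \<le> M (PB p t)" using en True en_TP[OF wf Cons.prems(3)] by blast
      hence pa: "M (PA p t) = 0" using Cons.prems(1,3) unfolding thinv_def by fastforce
      have pa1: "fire (Theta N) M u (PA p t) = 1"
        using S_TP[OF wf Cons.prems(1) Cons.prems(3)] en True by auto
      have "u \<in> NewTrans N" "target N u \<in> set \<beta>" using True Cons.prems(3) inb NewTrans_eq[OF wf] target_eq[OF wf] by auto
      thus ?thesis using IH pa pa1 True by simp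
    next
      case False
      have pa1: "fire (Theta N) M u (PA p t) = M (PA p t)"
      proof (cases u)
        case (OldT t')
        hence "t' \<noteq> t" using \<open>u \<noteq> OldT t\<close> by simp
        thus ?thesis using S_Old[OF wf Cons.prems(1)] tr en OldT Cons.prems(3) by auto
      next
        case (TP p' t')
        thus ?thesis using S_TP[OF wf Cons.prems(1)] tr en False by auto
      qed
      have "count_list (reduce N (u # \<beta>)) (TP p t) = count_list (reduce N \<beta>) (TP p t)"
        using False by simp
      thus ?thesis using IH pa1 \<open>u \<noteq> OldT t\<close> by simp
    qed
  qed
qed

end



lemma run_reach: "run N M \<sigma> = Some M' \<Longrightarrow> M' \<in> reach N M" unfolding reach_def by blast

context fixes N :: "('p,'t) pnet" assumes wf: "wf_net N"
begin

lemma expand_count_TP_gen: "count_list (expand N \<alpha>) (TP p t) = (if (p,t) \<in> thpairs N then count_list \<alpha> t else 0)"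
proof (induction \<alpha>)
  case Nil thus ?case by simp
next
  case (Cons t' \<alpha>)
  have "count_list (Seq (NewTransPre N t')) (TP p t) = (if (p,t) \<in> thpairs N \<and> t' = t then 1 else 0)"
  proof -
    have d: "distinct (Seq (NewTransPre N t'))" and st: "set (Seq (NewTransPre N t')) = {TP q t' | q. (q,t') \<in> thpairs N}"
      using Seq_NTP[OF wf, of t'] by auto
    show ?thesis unfolding count_distinct[OF d] st by auto
  qed
  thus ?case using Cons by (auto simp: count_list_append')
qed

lemma expand_count_TP: "(p,t) \<in> thpairs N \<Longrightarrow> count_list (expand N \<alpha>) (TP p t) = count_list \<alpha> t"
  using expand_count_TP_gen by simp
lemma expand_count_TP_no: "(p,t) \<notin> thpairs N \<Longrightarrow> count_list (expand N \<alpha>) (TP p t) = 0"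
  using expand_count_TP_gen by simp

lemma part2: "feasible N M0 \<alpha> \<Longrightarrow> feasible (Theta N) (Theta_M0 M0) (expand N \<alpha>)"
  unfolding feasible_def using expand_run[OF wf] by blast

lemma part3:
  assumes fb: "feasible (Theta N) (Theta_M0 M0) \<beta>'"
  shows "feasible (Theta N) (Theta_M0 M0) (reduce N \<beta>') \<and>
        (\<exists>\<alpha>. feasible N M0 \<alpha> \<and> feasible (Theta N) (Theta_M0 M0) (expand N \<alpha>) \<and>
             parikh (expand N \<alpha>) = parikh (reduce N \<beta>'))"
proof -
  have r: "run (Theta N) (Theta_M0 M0) \<beta>' \<noteq> None" using fb unfolding feasible_def .
  have f1: "feasible (Theta N) (Theta_M0 M0) (reduce N \<beta>')"
    unfolding feasible_def by (rule R1[OF wf r]) simp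
  obtain M'' where M'': "run (Theta N) (Theta_M0 M0) \<beta>' = Some M''" using r by blast
  have a: "run N M0 (oldproj \<beta>') = Some (absM N M'')"
  proof -
    have "run N (absM N (Theta_M0 M0)) (oldproj \<beta>') = Some (absM N M'')"
      using Back[OF wf thinv_M0[OF wf] M''] by blast
    thus ?thesis by (simp add: absM_M0[OF wf])
  qed
  hence fa: "feasible N M0 (oldproj \<beta>')" unfolding feasible_def by simp
  have sb: "set \<beta>' \<subseteq> transs (Theta N)" using run_set[OF M''] .
  have "parikh (expand N (oldproj \<beta>')) = parikh (reduce N \<beta>')"
  proof (rule ext)
    fix u show "parikh (expand N (oldproj \<beta>')) u = parikh (reduce N \<beta>') u"
    proof (cases u)
      case (OldT t)
      thus ?thesis by (simp add: parikh_def expand_count_old[OF wf] oldproj_count reduce_count_old[OF wf])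
    next
      case (TP p t)
      show ?thesis
      proof (cases "(p,t) \<in> thpairs N")
        case True
        have L: "count_list (expand N (oldproj \<beta>')) (TP p t) = count_list \<beta>' (OldT t)"
          using expand_count_TP[OF True] oldproj_count by simp
        show ?thesis
        proof (cases "OldT t \<in> set \<beta>'")
          case True
          have "count_list (reduce N \<beta>') (TP p t) + Theta_M0 M0 (PA p t) = count_list \<beta>' (OldT t)"
            by (rule C2[OF wf thinv_M0[OF wf] r \<open>(p,t) \<in> thpairs N\<close> True])
          thus ?thesis using L TP by (simp add: parikh_def Theta_M0_def)
        next
          case False
          thus ?thesis using L TP reduce_count0[OF wf \<open>(p,t) \<in> thpairs N\<close> False]
            by (simp add: parikh_def count_list_0_iff)
        qed
      next
        case False
        have "set (reduce N \<beta>') \<subseteq> transs (Theta N)" using sb reduce_set by blast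
        hence "TP p t \<notin> set (reduce N \<beta>')" using False by auto
        hence "count_list (reduce N \<beta>') (TP p t) = 0" by (simp add: count_list_0_iff)
        moreover have "count_list (expand N (oldproj \<beta>')) (TP p t) = 0"
          using expand_count_TP_no[OF False] .
        ultimately show ?thesis using TP by (simp add: parikh_def)
      qed
    qed
  qed
  thus ?thesis using f1 fa part2 by blast
qed


lemma part5: "deadlockable (Theta N) (Theta_M0 M0) \<longleftrightarrow> deadlockable N M0"
proof
  assume "deadlockable (Theta N) (Theta_M0 M0)"
  then obtain M' \<beta> where r: "run (Theta N) (Theta_M0 M0) \<beta> = Some M'"
    and d: "\<forall>u \<in> transs (Theta N). \<not> enabled (Theta N) M' u"
    unfolding deadlockable_def reach_def by blast
  have b: "run N (absM N (Theta_M0 M0)) (oldproj \<beta>) = Some (absM N M') \<and> thinv N M'"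
    using Back[OF wf thinv_M0[OF wf] r] by blast
  hence "absM N M' \<in> reach N M0" using absM_M0[OF wf] run_reach by metis
  moreover have "\<forall>t \<in> transs N. \<not> enabled N (absM N M') t"
  proof (intro ballI notI)
    fix t assume t: "t \<in> transs N" and en: "enabled N (absM N M') t"
    from Fwd_enable[OF wf _ t en] b d t show False by (auto dest: pair_D[OF wf])
  qed
  ultimately show "deadlockable N M0" unfolding deadlockable_def by blast
next
  assume "deadlockable N M0"
  then obtain M \<alpha> where r: "run N M0 \<alpha> = Some M" and d: "\<forall>t \<in> transs N. \<not> enabled N M t"
    unfolding deadlockable_def reach_def by blast
  have r1: "run (Theta N) (Theta_M0 M0) (expand N \<alpha>) = Some (Theta_M0 M)" using expand_run[OF wf r] .
  obtain xs M'' where r2: "run (Theta N) (Theta_M0 M) xs = Some M''"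
    and d2: "\<forall>u \<in> transs (Theta N). \<not> enabled (Theta N) M'' u"
    using Dead[OF wf thinv_M0[OF wf], of M] d absM_M0[OF wf] by metis
  have "run (Theta N) (Theta_M0 M0) (expand N \<alpha> @ xs) = Some M''" using r1 r2 by (simp add: run_append)
  thus "deadlockable (Theta N) (Theta_M0 M0)" using d2 unfolding deadlockable_def reach_def by blast
qed

lemma part6: "live (Theta N) (Theta_M0 M0) \<longleftrightarrow> live N M0"
proof
  assume L: "live (Theta N) (Theta_M0 M0)"
  show "live N M0" unfolding live_def
  proof (intro ballI)
    fix t M assume t: "t \<in> transs N" and M: "M \<in> reach N M0"
    then obtain \<alpha> where r: "run N M0 \<alpha> = Some M" unfolding reach_def by blast
    have TM: "Theta_M0 M \<in> reach (Theta N) (Theta_M0 M0)" using expand_run[OF wf r] run_reach by blast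
    then obtain M'' where M'': "M'' \<in> reach (Theta N) (Theta_M0 M)" "enabled (Theta N) M'' (OldT t)"
    proof -
      have "OldT t \<in> transs (Theta N)" using t by simp
      thus ?thesis using L \<open>Theta_M0 M \<in> reach (Theta N) (Theta_M0 M0)\<close> that unfolding live_def by blast
    qed
    then obtain \<beta> where rb: "run (Theta N) (Theta_M0 M) \<beta> = Some M''" unfolding reach_def by blast
    have b: "run N (absM N (Theta_M0 M)) (oldproj \<beta>) = Some (absM N M'') \<and> thinv N M''"
      using Back[OF wf thinv_M0[OF wf] rb] by blast
    hence "absM N M'' \<in> reach N M" using absM_M0[OF wf] run_reach by metis
    moreover have "enabled N (absM N M'') t" using S_Old[OF wf _ t M''(2)] b by blast
    ultimately show "\<exists>M''\<in>reach N M. enabled N M'' t" by blast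
  qed
next
  assume L: "live N M0"
  show "live (Theta N) (Theta_M0 M0)" unfolding live_def
  proof (intro ballI)
    fix u M' assume u: "u \<in> transs (Theta N)" and M': "M' \<in> reach (Theta N) (Theta_M0 M0)"
    then obtain \<beta> where rb: "run (Theta N) (Theta_M0 M0) \<beta> = Some M'" unfolding reach_def by blast
    have b: "run N (absM N (Theta_M0 M0)) (oldproj \<beta>) = Some (absM N M') \<and> thinv N M'"
      using Back[OF wf thinv_M0[OF wf] rb] by blast
    hence aM: "absM N M' \<in> reach N M0" and inv: "thinv N M'" using absM_M0[OF wf] run_reach by metis+
    show "\<exists>M''\<in>reach (Theta N) M'. enabled (Theta N) M'' u"
    proof (cases u)
      case (OldT t)
      hence t: "t \<in> transs N" using u by simp
      obtain M1 where M1: "M1 \<in> reach N (absM N M')" "enabled N M1 t" using L t aM unfolding live_def by blast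
      then obtain \<sigma> where rs: "run N (absM N M') \<sigma> = Some M1" unfolding reach_def by blast
      obtain xs M2 where s: "run (Theta N) M' xs = Some M2" "thinv N M2" "absM N M2 = M1"
        using Sim[OF wf inv rs] by blast
      obtain ys M3 where s2: "run (Theta N) M2 ys = Some M3" "enabled (Theta N) M3 (OldT t)"
        using Pre_t[OF wf s(2) t] s(3) M1(2) by blast
      have "run (Theta N) M' (xs @ ys) = Some M3" using s s2 by (simp add: run_append)
      thus ?thesis using s2 OldT run_reach by blast
    next
      case (TP p t)
      hence pt: "(p,t) \<in> thpairs N" using u by simp
      hence t: "t \<in> transs N" and pp: "p \<in> places N" using pair_D[OF wf] by auto
      obtain M1 where M1: "M1 \<in> reach N (absM N M')" "enabled N M1 t" using L t aM unfolding live_def by blast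
      then obtain \<sigma> where rs: "run N (absM N M') \<sigma> = Some M1" unfolding reach_def by blast
      have "fire N M1 t \<in> reach N M1" using M1(2) t run_reach[of N M1 "[t]"] by simp
      hence "fire N M1 t \<in> reach N M0" using reach_trans M1(1) aM by metis
      then obtain M3 where M3: "M3 \<in> reach N (fire N M1 t)" "enabled N M3 t" using L t unfolding live_def by blast
      then obtain \<sigma>2 where rs2: "run N (fire N M1 t) \<sigma>2 = Some M3" unfolding reach_def by blast
      obtain xs Ma where s: "run (Theta N) M' xs = Some Ma" "thinv N Ma" "absM N Ma = M1"
        using Sim[OF wf inv rs] by blast
      obtain ys Mb where s2: "run (Theta N) Ma ys = Some Mb" "thinv N Mb" "absM N Mb = fire N M1 t"
        "Mb (PA p t) = 0"
        using Step[OF wf s(2) t] s(3) M1(2) pt by fastforce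
      obtain zs Mc where s3: "run (Theta N) Mb zs = Some Mc" "thinv N Mc" "absM N Mc = M3"
        "Mc (PA p t) = 0"
        using Sim[OF wf s2(2), of \<sigma>2 M3] s2(3,4) rs2 pt by fastforce
      have pb: "Mc (PB p t) = 1" using s3(2,4) pt unfolding thinv_def by fastforce
      have "pre N p t \<le> Mc (Old p)"
        using M3(2) enabled_all[OF wf] s3(3,4) absM_pair[OF wf pt, of Mc] by (metis add.right_neutral mult_0)
      hence en: "enabled (Theta N) Mc (TP p t)" using pb en_TP[OF wf pt] by simp
      have "run (Theta N) M' (xs @ ys @ zs) = Some Mc" using s s2 s3 by (simp add: run_append)
      thus ?thesis using en TP run_reach by blast
    qed
  qed
qed

end



lemma preP_del: "preP (delete_places N S) x = (if x \<in> S then {} else preP N x)"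
  by (auto simp: preP_def delete_places_def)
lemma postP_del: "postP (delete_places N S) x = (if x \<in> S then {} else postP N x)"
  by (auto simp: postP_def delete_places_def)
lemma places_del: "places (delete_places N S) = places N - S"
  by (simp add: delete_places_def)
lemma del_empty: "delete_places N {} = N"
  by (simp add: delete_places_def)

context fixes N :: "('p,'t) pnet" assumes wf: "wf_net N"
begin

lemma postP_Old_pair: "(p,t) \<in> thpairs N \<Longrightarrow> postP (Theta N) (Old p) = {TP p t}"
proof (rule set_eqI)
  fix u assume pt: "(p,t) \<in> thpairs N"
  show "u \<in> postP (Theta N) (Old p) \<longleftrightarrow> u \<in> {TP p t}"
  proof (cases u)
    case (OldT t')
    have "pre N p t' > 0 \<Longrightarrow> t' = t" using pair_D[OF wf pt] by blast
    thus ?thesis using OldT pt by (auto simp: postP_def)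
  next
    case (TP p' t')
    have "(p,t') \<in> thpairs N \<Longrightarrow> t' = t" using pair_unique[OF wf pt] by blast
    thus ?thesis using TP pt pair_D[OF wf pt] by (auto simp: postP_def)
  qed
qed

lemma postP_Old_nopair: "\<forall>t. (p,t) \<notin> thpairs N \<Longrightarrow> postP (Theta N) (Old p) = OldT ` postP N p"
proof (rule set_eqI)
  fix u assume pt: "\<forall>t. (p,t) \<notin> thpairs N"
  show "u \<in> postP (Theta N) (Old p) \<longleftrightarrow> u \<in> OldT ` postP N p"
    using pt by (cases u) (auto simp: postP_def)
qed

lemma preP_Old: "preP (Theta N) (Old p) = OldT ` preP N p"
proof (rule set_eqI)
  fix u show "u \<in> preP (Theta N) (Old p) \<longleftrightarrow> u \<in> OldT ` preP N p"
    by (cases u) (auto simp: preP_def)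
qed

lemma postP_PA: "(p,t) \<in> thpairs N \<Longrightarrow> postP (Theta N) (PA p t) = {OldT t}"
proof (rule set_eqI)
  fix u assume pt: "(p,t) \<in> thpairs N"
  show "u \<in> postP (Theta N) (PA p t) \<longleftrightarrow> u \<in> {OldT t}"
    using pt pair_D[OF wf pt, THEN conjunct2, THEN conjunct1] by (cases u) (auto simp add: postP_def)
qed
lemma preP_PA: "(p,t) \<in> thpairs N \<Longrightarrow> preP (Theta N) (PA p t) = {TP p t}"
proof (rule set_eqI)
  fix u assume pt: "(p,t) \<in> thpairs N"
  show "u \<in> preP (Theta N) (PA p t) \<longleftrightarrow> u \<in> {TP p t}"
    using pt by (cases u) (auto simp: preP_def)
qed
lemma postP_PB: "(p,t) \<in> thpairs N \<Longrightarrow> postP (Theta N) (PB p t) = {TP p t}"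
proof (rule set_eqI)
  fix u assume pt: "(p,t) \<in> thpairs N"
  show "u \<in> postP (Theta N) (PB p t) \<longleftrightarrow> u \<in> {TP p t}"
    using pt by (cases u) (auto simp: postP_def)
qed
lemma preP_PB: "(p,t) \<in> thpairs N \<Longrightarrow> preP (Theta N) (PB p t) = {OldT t}"
proof (rule set_eqI)
  fix u assume pt: "(p,t) \<in> thpairs N"
  show "u \<in> preP (Theta N) (PB p t) \<longleftrightarrow> u \<in> {OldT t}"
    using pt pair_D[OF wf pt, THEN conjunct2, THEN conjunct1] by (cases u) (auto simp add: preP_def)
qed

lemma pair_postP: "(p,t) \<in> thpairs N \<Longrightarrow> postP N p = {t}"
  unfolding thpairs_def by simp

lemma shared_Th: "shared (Theta N) x \<longleftrightarrow> (\<exists>p. x = Old p \<and> shared N p)"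
proof (cases x)
  case (Old p)
  show ?thesis
  proof (cases "\<exists>t. (p,t) \<in> thpairs N")
    case True
    then obtain t where pt: "(p,t) \<in> thpairs N" by blast
    show ?thesis using Old postP_Old_pair[OF pt] pair_postP[OF pt] by (simp add: shared_def)
  next
    case False
    have ci: "card (OldT ` postP N p) = card (postP N p)" by (rule card_image) (simp add: inj_on_def)
    have nf: "\<forall>t. (p,t) \<notin> thpairs N" using False by blast
    show ?thesis unfolding shared_def Old postP_Old_nopair[OF nf] ci by simp
  qed
next
  case (PA p t) thus ?thesis by (cases "(p,t) \<in> thpairs N") (auto simp: shared_def postP_PA)
next
  case (PB p t) thus ?thesis by (cases "(p,t) \<in> thpairs N") (auto simp: shared_def postP_PB)
qed

lemma sharedPlaces_Th: "sharedPlaces (Theta N) = Old ` sharedPlaces N"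
  unfolding sharedPlaces_def using shared_Th by auto

lemma shared_nopair: "p \<in> sharedPlaces N \<Longrightarrow> (p,t) \<notin> thpairs N"
proof
  assume s: "p \<in> sharedPlaces N" and pt: "(p,t) \<in> thpairs N"
  have "card (postP N p) = 1" using pair_postP[OF pt] by simp
  thus False using s by (simp add: sharedPlaces_def shared_def)
qed

lemma oneS_Th: "oneS N \<Longrightarrow> oneS (Theta N)"
proof -
  assume o: "oneS N"
  have "finite (sharedPlaces N)" using wf unfolding wf_net_def sharedPlaces_def shared_def
    by (metis (no_types, lifting) finite_subset mem_Collect_eq subsetI)
  hence "card (Old ` sharedPlaces N :: ('p,'t) tplace set) \<le> card (sharedPlaces N)" by (rule card_image_le)
  thus ?thesis using o unfolding oneS_def sharedPlaces_Th by simp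
qed

lemma homog_Th: "homogeneous N \<Longrightarrow> homogeneous (Theta N)"
  unfolding homogeneous_def
proof (intro ballI)
  fix x u u' assume h: "\<forall>p\<in>places N. \<forall>t\<in>postP N p. \<forall>t'\<in>postP N p. pre N p t = pre N p t'"
    and x: "x \<in> places (Theta N)" and u: "u \<in> postP (Theta N) x" and u': "u' \<in> postP (Theta N) x"
  show "pre (Theta N) x u = pre (Theta N) x u'"
  proof (cases x)
    case (Old p)
    show ?thesis
    proof (cases "\<exists>t. (p,t) \<in> thpairs N")
      case True
      then obtain t where pt: "(p,t) \<in> thpairs N" by blast
      thus ?thesis using u u' Old postP_Old_pair[OF pt] by simp
    next
      case False
      hence nf: "\<forall>t. (p,t) \<notin> thpairs N" by blast
      obtain t t' where tt: "u = OldT t" "u' = OldT t'" "t \<in> postP N p" "t' \<in> postP N p"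
        using u u' Old postP_Old_nopair[OF nf] by blast
      have "p \<in> places N" using x Old by simp
      hence "pre N p t = pre N p t'" using h tt by blast
      thus ?thesis using tt Old nf by simp
    qed
  next
    case (PA p t)
    hence "(p,t) \<in> thpairs N" using x by simp
    thus ?thesis using u u' PA postP_PA by simp
  next
    case (PB p t)
    hence "(p,t) \<in> thpairs N" using x by simp
    thus ?thesis using u u' PB postP_PB by simp
  qed
qed

lemma WMG_Th: "WMG_le (shared_deletion N) \<Longrightarrow> WMG_le (shared_deletion (Theta N))"
  unfolding WMG_le_def shared_deletion_def places_del preP_del postP_del sharedPlaces_Th
proof (intro ballI)
  fix x assume h: "\<forall>p\<in>places N - sharedPlaces N.
      card (if p \<in> sharedPlaces N then {} else preP N p) \<le> 1 \<and> card (if p \<in> sharedPlaces N then {} else postP N p) \<le> 1"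
    and x: "x \<in> places (Theta N) - Old ` sharedPlaces N"
  show "card (if x \<in> Old ` sharedPlaces N then {} else preP (Theta N) x) \<le> 1 \<and>
        card (if x \<in> Old ` sharedPlaces N then {} else postP (Theta N) x) \<le> 1"
  proof (cases x)
    case (Old p)
    hence p: "p \<in> places N - sharedPlaces N" using x by auto
    have ci: "\<And>A. card (OldT ` A :: ('p,'t) ttrans set) = card A" by (rule card_image) (simp add: inj_on_def)
    have a: "card (preP (Theta N) x) \<le> 1" using h p Old by (simp add: preP_Old ci)
    have b: "card (postP (Theta N) x) \<le> 1"
    proof (cases "\<exists>t. (p,t) \<in> thpairs N")
      case True
      then obtain t where pt: "(p,t) \<in> thpairs N" by blast
      thus ?thesis using Old postP_Old_pair[OF pt] by simp
    next
      case False thus ?thesis using h p Old postP_Old_nopair ci by simp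
    qed
    show ?thesis using a b x by simp
  next
    case (PA p t) thus ?thesis using x by (simp add: preP_PA postP_PA)
  next
    case (PB p t) thus ?thesis using x by (simp add: preP_PB postP_PB)
  qed
qed

lemma H1S_Th: "H1S_WMG_le N \<Longrightarrow> H1S_WMG_le (Theta N)"
  unfolding H1S_WMG_le_def using homog_Th oneS_Th WMG_Th by blast

end



lemma arcs_mem1: "(Inl x, Inr u) \<in> arcs (delete_places M S) \<longleftrightarrow> x \<notin> S \<and> pre M x u > 0"
  by (auto simp: arcs_def delete_places_def)
lemma arcs_mem2: "(Inr u, Inl x) \<in> arcs (delete_places M S) \<longleftrightarrow> x \<notin> S \<and> post M u x > 0"
  by (auto simp: arcs_def delete_places_def)
lemma arcs_cases: "(a,b) \<in> arcs (delete_places M S) \<Longrightarrow>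
   (\<exists>x u. a = Inl x \<and> b = Inr u \<and> x \<notin> S \<and> pre M x u > 0) \<or> (\<exists>x u. a = Inr u \<and> b = Inl x \<and> x \<notin> S \<and> post M u x > 0)"
  by (auto simp: arcs_def delete_places_def split: if_splits)
lemma path2: "(a,b) \<in> R \<Longrightarrow> (b,c) \<in> R \<Longrightarrow> (a,c) \<in> R\<^sup>*" by auto
lemma path3: "(a,b) \<in> R \<Longrightarrow> (b,c) \<in> R \<Longrightarrow> (c,d) \<in> R \<Longrightarrow> (a,d) \<in> R\<^sup>*"
  by (meson converse_rtrancl_into_rtrancl r_into_rtrancl)
lemma nodes_del: "nodes (delete_places M S) = Inl ` (places M - S) \<union> Inr ` transs M"
  by (simp add: nodes_def delete_places_def)

context fixes N :: "('p,'t) pnet" assumes wf: "wf_net N"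
begin

lemma SC:
  assumes nS: "\<forall>p\<in>S. \<forall>t. (p,t) \<notin> thpairs N" and sc: "strongly_connected (delete_places N S)"
  shows "strongly_connected (delete_places (Theta N) (Old ` S))"
proof -
  let ?R = "arcs (delete_places (Theta N) (Old ` S))"
  let ?f = "map_sum Old OldT :: 'p + 't \<Rightarrow> ('p,'t) tplace + ('p,'t) ttrans"
  have a1: "(Inl (PA p t), Inr (OldT t)) \<in> ?R"
   and a2: "(Inr (OldT t), Inl (PB p t)) \<in> ?R"
   and a3: "(Inl (PB p t), Inr (TP p t)) \<in> ?R"
   and a4: "(Inr (TP p t), Inl (PA p t)) \<in> ?R" if pt: "(p,t) \<in> thpairs N" for p t
    using pt by (auto simp: arcs_mem1 arcs_mem2)
  have stp: "(?f a, ?f b) \<in> ?R\<^sup>*" if ab: "(a,b) \<in> arcs (delete_places N S)" for a b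
  proof -
    from arcs_cases[OF ab] show ?thesis
    proof (elim disjE exE conjE)
      fix p t assume e: "a = Inl p" "b = Inr t" "p \<notin> S" "pre N p t > 0"
      show ?thesis
      proof (cases "(p,t) \<in> thpairs N")
        case True
        have "(Inl (Old p), Inr (TP p t)) \<in> ?R" using True e by (auto simp: arcs_mem1)
        hence "(Inl (Old p), Inl (PA p t)) \<in> ?R\<^sup>*" using a4[OF True]
          by (meson rtrancl.rtrancl_into_rtrancl r_into_rtrancl)
        hence "(Inl (Old p), Inr (OldT t)) \<in> ?R\<^sup>*" using a1[OF True] by (rule rtrancl.rtrancl_into_rtrancl)
        thus ?thesis using e by simp
      next
        case False
        have "(Inl (Old p), Inr (OldT t)) \<in> ?R" using False e by (auto simp: arcs_mem1)
        thus ?thesis using e by auto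
      qed
    next
      fix p t assume e: "a = Inr t" "b = Inl p" "p \<notin> S" "post N t p > 0"
      have "(Inr (OldT t), Inl (Old p)) \<in> ?R" using e by (auto simp: arcs_mem2)
      thus ?thesis using e by auto
    qed
  qed
  have lift: "(?f a, ?f b) \<in> ?R\<^sup>*" if "(a,b) \<in> (arcs (delete_places N S))\<^sup>*" for a b
    using that
  proof (induction rule: rtrancl_induct)
    case base thus ?case by simp
  next
    case (step y z) thus ?case using stp[OF step.hyps(2)] by (meson rtrancl_trans)
  qed
  have node: "\<exists>x0 \<in> nodes (delete_places N S). (x, ?f x0) \<in> ?R\<^sup>* \<and> (?f x0, x) \<in> ?R\<^sup>*"
    if x: "x \<in> nodes (delete_places (Theta N) (Old ` S))" for x
  proof -
    from x consider (O) p where "x = Inl (Old p)" "p \<in> places N" "p \<notin> S"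
      | (A) p t where "x = Inl (PA p t)" "(p,t) \<in> thpairs N"
      | (B) p t where "x = Inl (PB p t)" "(p,t) \<in> thpairs N"
      | (T) t where "x = Inr (OldT t)" "t \<in> transs N"
      | (P) p t where "x = Inr (TP p t)" "(p,t) \<in> thpairs N"
      unfolding nodes_del places_Th transs_Th by (auto simp: image_iff)
    thus ?thesis
    proof cases
      case O thus ?thesis by (intro bexI[of _ "Inl p"]) (auto simp: nodes_del)
    next
      case (A p t)
      hence tN: "Inr t \<in> nodes (delete_places N S)" using pair_D[OF wf A(2)] by (auto simp: nodes_del)
      have "(x, ?f (Inr t)) \<in> ?R\<^sup>*" using A a1 by auto
      moreover have "(?f (Inr t), x) \<in> ?R\<^sup>*" using A a2[OF A(2)] a3[OF A(2)] a4[OF A(2)]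
        by (simp add: path2 path3)
      ultimately show ?thesis using tN by blast
    next
      case (B p t)
      hence tN: "Inr t \<in> nodes (delete_places N S)" using pair_D[OF wf B(2)] by (auto simp: nodes_del)
      have "(x, ?f (Inr t)) \<in> ?R\<^sup>*" using B a3[OF B(2)] a4[OF B(2)] a1[OF B(2)]
        by (simp add: path2 path3)
      moreover have "(?f (Inr t), x) \<in> ?R\<^sup>*" using B a2 by auto
      ultimately show ?thesis using tN by blast
    next
      case (T t) thus ?thesis by (intro bexI[of _ "Inr t"]) (auto simp: nodes_del)
    next
      case (P p t)
      hence tN: "Inr t \<in> nodes (delete_places N S)" using pair_D[OF wf P(2)] by (auto simp: nodes_del)
      have "(x, ?f (Inr t)) \<in> ?R\<^sup>*" using P a4[OF P(2)] a1[OF P(2)]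
        by (simp add: path2 path3)
      moreover have "(?f (Inr t), x) \<in> ?R\<^sup>*" using P a2[OF P(2)] a3[OF P(2)]
        by (simp add: path2 path3)
      ultimately show ?thesis using tN by blast
    qed
  qed
  show ?thesis unfolding strongly_connected_def
  proof (intro ballI)
    fix x y assume x: "x \<in> nodes (delete_places (Theta N) (Old ` S))" and y: "y \<in> nodes (delete_places (Theta N) (Old ` S))"
    obtain x0 where x0: "x0 \<in> nodes (delete_places N S)" "(x, ?f x0) \<in> ?R\<^sup>*" using node[OF x] by blast
    obtain y0 where y0: "y0 \<in> nodes (delete_places N S)" "(?f y0, y) \<in> ?R\<^sup>*" using node[OF y] by blast
    have "(x0, y0) \<in> (arcs (delete_places N S))\<^sup>*" using sc x0 y0 unfolding strongly_connected_def by blast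
    hence "(?f x0, ?f y0) \<in> ?R\<^sup>*" by (rule lift)
    thus "(x, y) \<in> ?R\<^sup>*" using x0 y0 by (meson rtrancl_trans)
  qed
qed

lemma SC_full: "strongly_connected N \<Longrightarrow> strongly_connected (Theta N)"
  using SC[of "{}"] by (simp add: del_empty)

lemma SC_del: "strongly_connected (shared_deletion N) \<Longrightarrow> strongly_connected (shared_deletion (Theta N))"
  unfolding shared_deletion_def sharedPlaces_Th[OF wf]
  by (rule SC) (use shared_nopair[OF wf] in blast)

end



definition liftI :: "('p,'t) pnet \<Rightarrow> 'p \<Rightarrow> ('p,'t) ttrans \<Rightarrow> int" where
  "liftI N q u = (case u of OldT t \<Rightarrow> inc N q t | TP _ _ \<Rightarrow> 0)"

context fixes N :: "('p,'t) pnet" assumes wf: "wf_net N"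
begin

lemma incPAPB: "(p,t) \<in> thpairs N \<Longrightarrow> inc (Theta N) (PA p t) u + inc (Theta N) (PB p t) u = 0"
  by (cases u) (auto simp: inc_def)

lemma incOld_pair: assumes pt: "(q,tq) \<in> thpairs N"
  shows "inc (Theta N) (Old q) u = liftI N q u - int (pre N q tq) * inc (Theta N) (PA q tq) u"
proof (cases u)
  case (OldT t)
  show ?thesis
  proof (cases "t = tq")
    case True thus ?thesis using OldT pt by (simp add: inc_def liftI_def)
  next
    case False
    hence "(q,t) \<notin> thpairs N" using pair_unique[OF wf pt] by blast
    thus ?thesis using OldT False by (simp add: inc_def liftI_def)
  qed
next
  case (TP p' t')
  show ?thesis
  proof (cases "p' = q \<and> (p',t') \<in> thpairs N")
    case True
    hence "t' = tq" using pair_unique[OF wf pt] by blast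
    thus ?thesis using TP pt True by (simp add: inc_def liftI_def)
  next
    case False
    hence "\<not> (p' = q \<and> t' = tq)" using pt by blast
    thus ?thesis using TP False by (auto simp add: inc_def liftI_def)
  qed
qed

lemma incOld_nopair: "\<forall>t. (q,t) \<notin> thpairs N \<Longrightarrow> inc (Theta N) (Old q) u = liftI N q u"
  by (cases u) (auto simp: inc_def liftI_def)

lemma sum_lift: "(\<Sum>u\<in>transs (Theta N). liftI N q u * Y u) = (\<Sum>t\<in>transs N. inc N q t * Y (OldT t))"
proof -
  have fin: "finite (transs (Theta N))" using wf_Th[OF wf] by (simp add: wf_net_def)
  have "(\<Sum>u\<in>transs (Theta N). liftI N q u * Y u) = (\<Sum>u\<in>OldT ` transs N. liftI N q u * Y u)"
    by (rule sum.mono_neutral_right[OF fin]) (auto simp: transs_Th liftI_def)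
  also have "\<dots> = (\<Sum>t\<in>transs N. inc N q t * Y (OldT t))"
    by (subst sum.reindex) (auto simp: inj_on_def liftI_def)
  finally show ?thesis .
qed

lemma part4:
  assumes HB: "\<forall>p \<in> places N. struct_bounded N M0 p"
  shows "\<forall>x \<in> places (Theta N). struct_bounded (Theta N) (Theta_M0 M0) x"
proof
  fix x assume x: "x \<in> places (Theta N)"
  let ?S = "\<lambda>Y y. \<Sum>u\<in>transs (Theta N). inc (Theta N) y u * int (Y u)"
  have PAPB: "int (M (PA p t)) + int (M (PB p t)) = 1"
    if pt: "(p,t) \<in> thpairs N" and E: "\<forall>y \<in> places (Theta N). int (M y) = int (Theta_M0 M0 y) + ?S Y y"
    for M :: "('p,'t) tplace \<Rightarrow> nat" and Y p t
  proof -
    have "?S Y (PA p t) + ?S Y (PB p t) = (\<Sum>u\<in>transs (Theta N). (inc (Theta N) (PA p t) u + inc (Theta N) (PB p t) u) * int (Y u))"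
      by (simp add: sum.distrib distrib_right)
    also have "\<dots> = 0" using incPAPB[OF pt] by simp
    finally show ?thesis using E pt by (simp add: Theta_M0_def)
  qed
  show "struct_bounded (Theta N) (Theta_M0 M0) x"
  proof (cases x)
    case (PA p t)
    hence pt: "(p,t) \<in> thpairs N" using x by simp
    show ?thesis unfolding struct_bounded_def
      by (rule exI[of _ 1], intro allI impI) (use PAPB[OF pt] PA in force)
  next
    case (PB p t)
    hence pt: "(p,t) \<in> thpairs N" using x by simp
    show ?thesis unfolding struct_bounded_def
      by (rule exI[of _ 1], intro allI impI) (use PAPB[OF pt] PB in force)
  next
    case (Old p)
    hence p: "p \<in> places N" using x by simp
    obtain b where b: "\<And>(MN :: 'p \<Rightarrow> nat) (YN :: 't \<Rightarrow> nat).
        (\<forall>q \<in> places N. int (MN q) = int (M0 q) + (\<Sum>t \<in> transs N. inc N q t * int (YN t))) \<Longrightarrow> MN p \<le> b"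
      using HB p unfolding struct_bounded_def by blast
    show ?thesis unfolding struct_bounded_def
    proof (rule exI[of _ b], intro allI impI)
      fix M :: "('p,'t) tplace \<Rightarrow> nat" and Y
      assume E: "\<forall>y \<in> places (Theta N). int (M y) = int (Theta_M0 M0 y) + ?S Y y"
      let ?L = "\<lambda>q. \<Sum>t \<in> transs N. inc N q t * int (Y (OldT t))"
      have key: "int (M (Old q)) \<le> int (M0 q) + ?L q" if q: "q \<in> places N" for q
      proof (cases "\<exists>t. (q,t) \<in> thpairs N")
        case True
        then obtain tq where pt: "(q,tq) \<in> thpairs N" by blast
        have "?S Y (Old q) = (\<Sum>u\<in>transs (Theta N). liftI N q u * int (Y u)) - int (pre N q tq) * ?S Y (PA q tq)"
          by (simp add: incOld_pair[OF pt] left_diff_distrib sum_subtractf sum_distrib_left mult.assoc)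
        also have "\<dots> = ?L q - int (pre N q tq) * int (M (PA q tq))"
          using E pt by (simp add: sum_lift Theta_M0_def)
        finally have "int (M (Old q)) = int (M0 q) + ?L q - int (pre N q tq) * int (M (PA q tq))"
          using E q by (simp add: Theta_M0_def)
        thus ?thesis by simp
      next
        case False
        hence nf: "\<forall>t. (q,t) \<notin> thpairs N" by blast
        have "?S Y (Old q) = ?L q" by (simp add: incOld_nopair[OF nf] sum_lift)
        thus ?thesis using E q by (simp add: Theta_M0_def)
      qed
      define MN where "MN = (\<lambda>q. nat (int (M0 q) + ?L q))"
      have "\<forall>q \<in> places N. int (MN q) = int (M0 q) + ?L q"
      proof
        fix q assume "q \<in> places N"
        from key[OF this] have "0 \<le> int (M0 q) + ?L q" by linarith
        thus "int (MN q) = int (M0 q) + ?L q" unfolding MN_def by simp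
      qed
      hence "MN p \<le> b" using b[of MN "\<lambda>t. Y (OldT t)"] by blast
      moreover have "int (M (Old p)) \<le> int (MN p)"
        using key[OF p] unfolding MN_def by linarith
      ultimately have "M (Old p) \<le> b" by linarith
      thus "M x \<le> b" using Old by simp
    qed
  qed
qed

end


theorem mainTheorem8:
  fixes N :: "('p,'t) pnet" and M0 :: "'p \<Rightarrow> nat"
  assumes "wf_net N"
  shows
    "(oneS N \<longrightarrow> oneS (Theta N)) \<and>
     (homogeneous N \<longrightarrow> homogeneous (Theta N)) \<and>
     (H1S_WMG_le N \<longrightarrow> H1S_WMG_le (Theta N)) \<and>
     (strongly_connected N \<and> H1S_WMG_le N \<and> strongly_connected (shared_deletion N) \<longrightarrow>
        strongly_connected (Theta N) \<and> H1S_WMG_le (Theta N) \<and>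
        strongly_connected (shared_deletion (Theta N)))
   \<and> (\<forall>\<alpha>. feasible N M0 \<alpha> \<longrightarrow> feasible (Theta N) (Theta_M0 M0) (expand N \<alpha>))
   \<and> (\<forall>\<beta>'. feasible (Theta N) (Theta_M0 M0) \<beta>' \<longrightarrow>
        feasible (Theta N) (Theta_M0 M0) (reduce N \<beta>') \<and>
        (\<exists>\<alpha>. feasible N M0 \<alpha> \<and> feasible (Theta N) (Theta_M0 M0) (expand N \<alpha>) \<and>
             parikh (expand N \<alpha>) = parikh (reduce N \<beta>')))
   \<and> ((\<forall>p \<in> places N. struct_bounded N M0 p) \<longrightarrow>
        (\<forall>p \<in> places (Theta N). struct_bounded (Theta N) (Theta_M0 M0) p))
   \<and> (deadlockable (Theta N) (Theta_M0 M0) \<longleftrightarrow> deadlockable N M0)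
   \<and> (live (Theta N) (Theta_M0 M0) \<longleftrightarrow> live N M0)"
proof -
  note wf = assms
  have p1: "oneS N \<longrightarrow> oneS (Theta N)" using oneS_Th[OF wf] by blast
  have p2: "homogeneous N \<longrightarrow> homogeneous (Theta N)" using homog_Th[OF wf] by blast
  have p3: "H1S_WMG_le N \<longrightarrow> H1S_WMG_le (Theta N)" using H1S_Th[OF wf] by blast
  have p4: "strongly_connected N \<and> H1S_WMG_le N \<and> strongly_connected (shared_deletion N) \<longrightarrow>
        strongly_connected (Theta N) \<and> H1S_WMG_le (Theta N) \<and>
        strongly_connected (shared_deletion (Theta N))"
    using SC_full[OF wf] SC_del[OF wf] H1S_Th[OF wf] by blast
  have p5: "\<forall>\<alpha>. feasible N M0 \<alpha> \<longrightarrow> feasible (Theta N) (Theta_M0 M0) (expand N \<alpha>)"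
    using part2[OF wf] by blast
  have p6: "\<forall>\<beta>'. feasible (Theta N) (Theta_M0 M0) \<beta>' \<longrightarrow>
        feasible (Theta N) (Theta_M0 M0) (reduce N \<beta>') \<and>
        (\<exists>\<alpha>. feasible N M0 \<alpha> \<and> feasible (Theta N) (Theta_M0 M0) (expand N \<alpha>) \<and>
             parikh (expand N \<alpha>) = parikh (reduce N \<beta>'))"
    using part3[OF wf] by blast
  have p7: "(\<forall>p \<in> places N. struct_bounded N M0 p) \<longrightarrow>
        (\<forall>p \<in> places (Theta N). struct_bounded (Theta N) (Theta_M0 M0) p)"
    using part4[OF wf] by blast
  show ?thesis using p1 p2 p3 p4 p5 p6 p7 part5[OF wf] part6[OF wf] by blast
qed

end
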